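(* There exist an $\mathrm{FO}$-convergent sequence of finite graphs $(G_n)_{n\in\mathbb{N}}$ and a first-order formula $\xi(x)$ in the language of graphs with one free variable, satisfying $G_n\models(\exists x)\xi(x)$ for all $n$, such that there is no sequence $(r_n)$ with $r_n\in\xi(G_n)$ for which the sequence of rooted graphs $(G_n,r_n)$ is $\mathrm{FO}$-convergent.
   Context: Graphs are first-order structures in the language with one binary (edge) relation. For a formula $\phi$ with $p$ free variables and a structure $G$, $\phi(G)=\{\mathbf{v}\in V(G)^p : G\models\phi(\mathbf{v})\}$. The Stone pairing of $\phi$ ($p\ge1$) with a finite graph $G$ is $\langle\phi,G\rangle=|\phi(G)|/|V(G)|^p$; for sentences it is $1$ if $G\models\phi$ and $0$ otherwise. A sequence of finite graphs $(G_n)$ is $\mathrm{FO}$-convergent if $(\langle\phi,G_n\rangle)$ converges for every first-order formula $\phi$. The language of rooted graphs adds a constant symbol $\mathrm{Root}$; $(G,r)$ is $G$ with $\mathrm{Root}$ interpreted as the vertex $r$. A sequence of rooted finite graphs $(G_n,r_n)$ is $\mathrm{FO}$-convergent if $(\langle\phi,(G_n,r_n)\rangle)$ converges for every first-order formula $\phi$ in the language of rooted graphs (Stone pairings defined in the same way). *)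

theory Defs
  imports Complex_Main "HOL-Library.FuncSet"
begin

record graph =
  verts :: "nat set"
  adj   :: "nat \<Rightarrow> nat \<Rightarrow> bool"

definition finite_graph :: "graph \<Rightarrow> bool" where
  "finite_graph G \<longleftrightarrow> finite (verts G) \<and> verts G \<noteq> {} \<and>
     (\<forall>u v. adj G u v \<longrightarrow> u \<in> verts G \<and> v \<in> verts G) \<and>
     (\<forall>u v. adj G u v \<longrightarrow> adj G v u) \<and> (\<forall>v. \<not> adj G v v)"

text \<open>First-order formulas in the language of rooted graphs: variables are
  indexed by nat; the constant symbol Root is the term Rt.\<close>
datatype fterm = Var nat | Rt

datatype form =
    FEq fterm fterm
  | FAdj fterm fterm
  | FNot form
  | FAnd form form
  | FEx nat form

fun tvars :: "fterm \<Rightarrow> nat set" where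
  "tvars (Var i) = {i}"
| "tvars Rt = {}"

fun fv :: "form \<Rightarrow> nat set" where
  "fv (FEq s t) = tvars s \<union> tvars t"
| "fv (FAdj s t) = tvars s \<union> tvars t"
| "fv (FNot p) = fv p"
| "fv (FAnd p q) = fv p \<union> fv q"
| "fv (FEx i p) = fv p - {i}"

text \<open>Formulas of the language of (unrooted) graphs: no occurrence of Root.\<close>
fun troot :: "fterm \<Rightarrow> bool" where
  "troot (Var i) = False"
| "troot Rt = True"

fun no_root :: "form \<Rightarrow> bool" where
  "no_root (FEq s t) = (\<not> troot s \<and> \<not> troot t)"
| "no_root (FAdj s t) = (\<not> troot s \<and> \<not> troot t)"
| "no_root (FNot p) = no_root p"
| "no_root (FAnd p q) = (no_root p \<and> no_root q)"
| "no_root (FEx i p) = no_root p"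

fun teval :: "nat \<Rightarrow> (nat \<Rightarrow> nat) \<Rightarrow> fterm \<Rightarrow> nat" where
  "teval r e (Var i) = e i"
| "teval r e Rt = r"

fun sat :: "graph \<Rightarrow> nat \<Rightarrow> (nat \<Rightarrow> nat) \<Rightarrow> form \<Rightarrow> bool" where
  "sat G r e (FEq s t) = (teval r e s = teval r e t)"
| "sat G r e (FAdj s t) = adj G (teval r e s) (teval r e t)"
| "sat G r e (FNot p) = (\<not> sat G r e p)"
| "sat G r e (FAnd p q) = (sat G r e p \<and> sat G r e q)"
| "sat G r e (FEx i p) = (\<exists>v\<in>verts G. sat G r (e(i := v)) p)"

text \<open>Stone pairing of a formula with the rooted graph (G, r):
  the fraction of assignments of the free variables into V(G) satisfying the
  formula (for sentences this is 1 or 0 according to satisfaction).\<close>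
definition stone_rooted :: "form \<Rightarrow> graph \<Rightarrow> nat \<Rightarrow> real" where
  "stone_rooted \<phi> G r =
     real (card {e \<in> fv \<phi> \<rightarrow>\<^sub>E verts G. sat G r e \<phi>}) / real (card (verts G)) ^ card (fv \<phi>)"

text \<open>Stone pairing for formulas of the graph language (the root is irrelevant
  for Root-free formulas; we pick an arbitrary vertex).\<close>
definition stone :: "form \<Rightarrow> graph \<Rightarrow> real" where
  "stone \<phi> G = stone_rooted \<phi> G (SOME v. v \<in> verts G)"

definition FO_convergent :: "(nat \<Rightarrow> graph) \<Rightarrow> bool" where
  "FO_convergent G \<longleftrightarrow> (\<forall>\<phi>. no_root \<phi> \<longrightarrow> convergent (\<lambda>n. stone \<phi> (G n)))"

definition FO_convergent_rooted :: "(nat \<Rightarrow> graph) \<Rightarrow> (nat \<Rightarrow> nat) \<Rightarrow> bool" where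
  "FO_convergent_rooted G r \<longleftrightarrow> (\<forall>\<phi>. convergent (\<lambda>n. stone_rooted \<phi> (G n) (r n)))"

text \<open>\<xi>(G) for a formula with the single free variable 0.\<close>
definition defset :: "form \<Rightarrow> graph \<Rightarrow> nat set" where
  "defset \<xi> G = {v \<in> verts G. sat G (SOME v. v \<in> verts G) (\<lambda>_. v) \<xi>}"

end

theory Submission
  imports Defs
begin


fun teval' :: "'a \<Rightarrow> (nat \<Rightarrow> 'a) \<Rightarrow> fterm \<Rightarrow> 'a" where
  "teval' r e (Var i) = e i"
| "teval' r e Rt = r"

fun sat' :: "'a set \<Rightarrow> ('a \<Rightarrow> 'a \<Rightarrow> bool) \<Rightarrow> 'a \<Rightarrow> (nat \<Rightarrow> 'a) \<Rightarrow> form \<Rightarrow> bool" where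
  "sat' V A r e (FEq s t) = (teval' r e s = teval' r e t)"
| "sat' V A r e (FAdj s t) = A (teval' r e s) (teval' r e t)"
| "sat' V A r e (FNot p) = (\<not> sat' V A r e p)"
| "sat' V A r e (FAnd p q) = (sat' V A r e p \<and> sat' V A r e q)"
| "sat' V A r e (FEx i p) = (\<exists>v\<in>V. sat' V A r (e(i := v)) p)"

lemma teval'_cong: "(\<forall>i\<in>tvars s. e i = e' i) \<Longrightarrow> teval' r e s = teval' r e' s"
  by (cases s) auto

lemma sat'_cong: "(\<forall>i\<in>fv \<phi>. e i = e' i) \<Longrightarrow> sat' V A r e \<phi> = sat' V A r e' \<phi>"
proof (induction \<phi> arbitrary: e e')
  case (FEq s t) thus ?case using teval'_cong[of s e e' r] teval'_cong[of t e e' r] by auto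
next
  case (FAdj s t) thus ?case using teval'_cong[of s e e' r] teval'_cong[of t e e' r] by auto
next
  case (FAnd p q)
  have "sat' V A r e p = sat' V A r e' p" "sat' V A r e q = sat' V A r e' q"
    using FAnd.IH FAnd.prems by auto
  thus ?case by simp
next
  case (FEx i p)
  have "\<And>v. sat' V A r (e(i:=v)) p = sat' V A r (e'(i:=v)) p"
    using FEx.IH FEx.prems by auto
  thus ?case by simp
qed auto

lemma sat'_noroot: "no_root \<phi> \<Longrightarrow> sat' V A r e \<phi> = sat' V A r' e \<phi>"
proof (induction \<phi> arbitrary: e)
  case (FEq s t) thus ?case by (cases s; cases t) auto
next
  case (FAdj s t) thus ?case by (cases s; cases t) auto
qed auto

lemma teval_transfer: "g (teval r e s) = teval' (g r) (g \<circ> e) s"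
  by (cases s) auto

lemma teval_in: "r \<in> W \<Longrightarrow> \<forall>i\<in>tvars s. e i \<in> W \<Longrightarrow> teval r e s \<in> W"
  by (cases s) auto

lemma sat_transfer:
  assumes bij: "bij_betw g (verts G) Vs"
    and adj: "\<forall>x\<in>verts G. \<forall>y\<in>verts G. adj G x y = A (g x) (g y)"
  shows "r \<in> verts G \<Longrightarrow> (\<forall>i\<in>fv \<phi>. e i \<in> verts G) \<Longrightarrow> sat G r e \<phi> = sat' Vs A (g r) (g \<circ> e) \<phi>"
proof (induction \<phi> arbitrary: e)
  case (FEq s t)
  have "teval r e s \<in> verts G" "teval r e t \<in> verts G"
    using FEq.prems teval_in[of r "verts G" s e] teval_in[of r "verts G" t e] by auto
  hence "(teval r e s = teval r e t) = (g (teval r e s) = g (teval r e t))"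
    using bij unfolding bij_betw_def inj_on_def by metis
  thus ?case using teval_transfer[of g r e s] teval_transfer[of g r e t] by (simp add: comp_def)
next
  case (FAdj s t)
  have "teval r e s \<in> verts G" "teval r e t \<in> verts G"
    using FAdj.prems teval_in[of r "verts G" s e] teval_in[of r "verts G" t e] by auto
  thus ?case using adj teval_transfer[of g r e s] teval_transfer[of g r e t] by (simp add: comp_def)
next
  case (FEx i p)
  have "sat G r e (FEx i p) = (\<exists>v\<in>verts G. sat' Vs A (g r) ((g \<circ> e)(i := g v)) p)"
  proof -
    have "\<And>v. v \<in> verts G \<Longrightarrow> sat G r (e(i:=v)) p = sat' Vs A (g r) ((g \<circ> e)(i := g v)) p"
    proof -
      fix v assume v: "v \<in> verts G"
      have "\<forall>j\<in>fv p. (e(i:=v)) j \<in> verts G" using FEx.prems v by auto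
      hence "sat G r (e(i:=v)) p = sat' Vs A (g r) (g \<circ> (e(i:=v))) p"
        using FEx.IH[of "e(i:=v)"] FEx.prems(1) by blast
      moreover have "g \<circ> (e(i:=v)) = (g \<circ> e)(i := g v)" by auto
      ultimately show "sat G r (e(i:=v)) p = sat' Vs A (g r) ((g \<circ> e)(i := g v)) p" by simp
    qed
    thus ?thesis by auto
  qed
  also have "\<dots> = (\<exists>w\<in>Vs. sat' Vs A (g r) ((g \<circ> e)(i := w)) p)"
    using bij unfolding bij_betw_def by auto
  finally show ?case by (simp only: sat'.simps)
qed auto

lemma card_transfer:
  assumes bij: "bij_betw g W Vs"
    and P: "\<And>e e'. (\<forall>i\<in>X. e i = e' i) \<Longrightarrow> P e = P e'"
  shows "card {e \<in> X \<rightarrow>\<^sub>E W. P (g \<circ> e)} = card {e \<in> X \<rightarrow>\<^sub>E Vs. P e}"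
proof -
  let ?h = "\<lambda>e. restrict (g \<circ> e) X"
  have inj: "inj_on ?h {e \<in> X \<rightarrow>\<^sub>E W. P (g \<circ> e)}"
  proof (rule inj_onI)
    fix e1 e2 assume e1: "e1 \<in> {e \<in> X \<rightarrow>\<^sub>E W. P (g \<circ> e)}" and e2: "e2 \<in> {e \<in> X \<rightarrow>\<^sub>E W. P (g \<circ> e)}"
      and eq: "?h e1 = ?h e2"
    show "e1 = e2"
    proof (rule PiE_ext)
      show "e1 \<in> X \<rightarrow>\<^sub>E W" "e2 \<in> X \<rightarrow>\<^sub>E W" using e1 e2 by auto
      fix x assume x: "x \<in> X"
      have "g (e1 x) = g (e2 x)" using fun_cong[OF eq, of x] x by simp
      moreover have "e1 x \<in> W" "e2 x \<in> W" using e1 e2 x by auto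
      ultimately show "e1 x = e2 x" using bij unfolding bij_betw_def inj_on_def by blast
    qed
  qed
  have img: "?h ` {e \<in> X \<rightarrow>\<^sub>E W. P (g \<circ> e)} = {e \<in> X \<rightarrow>\<^sub>E Vs. P e}"
  proof
    show "?h ` {e \<in> X \<rightarrow>\<^sub>E W. P (g \<circ> e)} \<subseteq> {e \<in> X \<rightarrow>\<^sub>E Vs. P e}"
    proof clarify
      fix e assume e: "e \<in> X \<rightarrow>\<^sub>E W" "P (g \<circ> e)"
      have "?h e \<in> X \<rightarrow>\<^sub>E Vs" using e bij bij_betwE by fastforce
      moreover have "P (?h e)" using e(2) P[of "?h e" "g \<circ> e"] by simp
      ultimately show "?h e \<in> X \<rightarrow>\<^sub>E Vs \<and> P (?h e)" by simp
    qed
  next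
    show "{e \<in> X \<rightarrow>\<^sub>E Vs. P e} \<subseteq> ?h ` {e \<in> X \<rightarrow>\<^sub>E W. P (g \<circ> e)}"
    proof clarify
      fix e assume e: "e \<in> X \<rightarrow>\<^sub>E Vs" "P e"
      define e0 where "e0 = restrict (inv_into W g \<circ> e) X"
      have e0W: "e0 \<in> X \<rightarrow>\<^sub>E W" using e bij unfolding e0_def
        by (auto simp: bij_betw_def PiE_iff intro!: inv_into_into)
      have he0: "?h e0 = e"
      proof (rule PiE_ext)
        show "?h e0 \<in> X \<rightarrow>\<^sub>E Vs" using e0W bij bij_betwE by fastforce
        show "e \<in> X \<rightarrow>\<^sub>E Vs" using e by simp
        fix x assume "x \<in> X"
        hence "e x \<in> g ` W" using e bij unfolding bij_betw_def by auto
        thus "?h e0 x = e x" using \<open>x \<in> X\<close> unfolding e0_def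
          by (simp add: f_inv_into_f)
      qed
      have "P (g \<circ> e0)" using e(2) P[of "g \<circ> e0" e] he0
        by (metis restrict_apply')
      thus "e \<in> ?h ` {e \<in> X \<rightarrow>\<^sub>E W. P (g \<circ> e)}" using e0W he0 by force
    qed
  qed
  show ?thesis using card_image[OF inj] img by simp
qed



type_synonym vx = "nat + (nat \<Rightarrow> nat)"

definition LV :: "nat \<Rightarrow> (nat \<Rightarrow> nat) set" where "LV D = {..<D} \<rightarrow>\<^sub>E {..<5}"
definition VV :: "nat \<Rightarrow> vx set" where "VV D = Inl ` {..<D} \<union> Inr ` LV D"

fun AA :: "nat \<Rightarrow> vx \<Rightarrow> vx \<Rightarrow> bool" where
  "AA a (Inl c) (Inr u) = (u c < a)"
| "AA a (Inr u) (Inl c) = (u c < a)"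
| "AA a (Inl c) (Inl d) = False"
| "AA a (Inr u) (Inr w) = False"

lemma AA_sym: "AA a x y = AA a y x"
  by (cases x; cases y) auto

lemma AA_isl: "isl x = isl y \<Longrightarrow> \<not> AA a x y"
  by (cases x; cases y) auto

definition SS :: "nat \<Rightarrow> nat \<Rightarrow> (nat \<Rightarrow> vx) \<Rightarrow> nat set \<Rightarrow> nat set \<Rightarrow> nat set" where
  "SS D a e X P = {c. c < D \<and> (\<forall>x\<in>X. e x \<noteq> Inl c) \<and>
      (\<forall>x\<in>X. \<not> isl (e x) \<longrightarrow> (AA a (Inl c) (e x) \<longleftrightarrow> x \<in> P))}"

lemma SS_fin: "finite (SS D a e X P)"
  by (rule finite_subset[of _ "{..<D}"]) (auto simp: SS_def)

lemma SS_norm: "SS D a e X P = SS D a e X {x\<in>X. \<not> isl (e x) \<and> x \<in> P}"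
  unfolding SS_def by auto

lemma SS_other: "c \<in> SS D a e X P \<Longrightarrow> c \<in> SS D a e X Q \<longleftrightarrow> (\<forall>x\<in>X. \<not> isl (e x) \<longrightarrow> (x \<in> P \<longleftrightarrow> x \<in> Q))"
  unfolding SS_def by auto

lemma SS_insert: "i \<notin> X \<Longrightarrow> SS D a (e(i:=v)) (insert i X) P =
   {c \<in> SS D a e X (P - {i}). v \<noteq> Inl c \<and> (\<not> isl v \<longrightarrow> (AA a (Inl c) v \<longleftrightarrow> i \<in> P))}"
  unfolding SS_def by auto

definition thr :: "nat \<Rightarrow> nat \<Rightarrow> nat \<Rightarrow> bool" where
  "thr r m n \<longleftrightarrow> m = n \<or> (2^r \<le> m \<and> 2^r \<le> n)"

lemma thr_sym: "thr r m n = thr r n m" unfolding thr_def by auto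
lemma thr_add: "thr r m n \<Longrightarrow> thr r m' n' \<Longrightarrow> thr r (m + m') (n + n')"
  unfolding thr_def by auto
lemma thr_add1: "thr r m n \<Longrightarrow> thr r (m + d) (n + d)"
  unfolding thr_def by auto
lemma thr_Suc: "thr (Suc r) m n \<Longrightarrow> thr r m n"
  unfolding thr_def by auto
lemma thr_minus: "thr (Suc r) m n \<Longrightarrow> d \<le> 1 \<Longrightarrow> thr r (m - d) (n - d)"
  unfolding thr_def by auto

definition Inv :: "nat \<Rightarrow> nat \<Rightarrow> nat \<Rightarrow> nat \<Rightarrow> nat \<Rightarrow> nat set \<Rightarrow> (nat \<Rightarrow> vx) \<Rightarrow> (nat \<Rightarrow> vx) \<Rightarrow> bool" where
  "Inv D1 a1 D2 a2 r X e1 e2 \<longleftrightarrow> finite X \<and> card X + r \<le> D1 \<and> card X + r \<le> D2 \<and>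
     (\<forall>x\<in>X. e1 x \<in> VV D1 \<and> e2 x \<in> VV D2) \<and> (\<forall>x\<in>X. isl (e1 x) = isl (e2 x)) \<and>
     (\<forall>x\<in>X. \<forall>y\<in>X. (e1 x = e1 y) = (e2 x = e2 y)) \<and>
     (\<forall>x\<in>X. \<forall>y\<in>X. AA a1 (e1 x) (e1 y) = AA a2 (e2 x) (e2 y)) \<and>
     (\<forall>P. P \<subseteq> X \<longrightarrow> thr r (card (SS D1 a1 e1 X P)) (card (SS D2 a2 e2 X P)))"

lemma Inv_sym: "Inv D1 a1 D2 a2 r X e1 e2 \<Longrightarrow> Inv D2 a2 D1 a1 r X e2 e1"
proof -
  assume H: "Inv D1 a1 D2 a2 r X e1 e2"
  have h: "finite X" "card X + r \<le> D1" "card X + r \<le> D2"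
    "\<forall>x\<in>X. e1 x \<in> VV D1 \<and> e2 x \<in> VV D2" "\<forall>x\<in>X. isl (e1 x) = isl (e2 x)"
    "\<forall>x\<in>X. \<forall>y\<in>X. (e1 x = e1 y) = (e2 x = e2 y)"
    "\<forall>x\<in>X. \<forall>y\<in>X. AA a1 (e1 x) (e1 y) = AA a2 (e2 x) (e2 y)"
    "\<forall>P. P \<subseteq> X \<longrightarrow> thr r (card (SS D1 a1 e1 X P)) (card (SS D2 a2 e2 X P))"
    using H unfolding Inv_def by blast+
  show ?thesis unfolding Inv_def
  proof (intro conjI)
    show "\<forall>P. P \<subseteq> X \<longrightarrow> thr r (card (SS D2 a2 e2 X P)) (card (SS D1 a1 e1 X P))"
      using h(8) thr_sym by blast
  qed (use h in auto)
qed



lemma SS_remove_leaf: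
  assumes "i \<in> X" "e i = Inr u" "P \<subseteq> X - {i}"
  shows "SS D a e (X - {i}) P = SS D a e X P \<union> SS D a e X (insert i P)"
    "SS D a e X P \<inter> SS D a e X (insert i P) = {}"
proof -
  have iP: "i \<notin> P" using assms(3) by auto
  show "SS D a e (X - {i}) P = SS D a e X P \<union> SS D a e X (insert i P)"
  proof (intro equalityI subsetI)
    fix c assume c: "c \<in> SS D a e (X - {i}) P"
    show "c \<in> SS D a e X P \<union> SS D a e X (insert i P)"
    proof (cases "u c < a")
      case True
      hence "c \<in> SS D a e X (insert i P)" using c assms iP unfolding SS_def by auto
      thus ?thesis by simp
    next
      case False
      hence "c \<in> SS D a e X P" using c assms iP unfolding SS_def by auto
      thus ?thesis by simp
    qed
  next
    fix c assume "c \<in> SS D a e X P \<union> SS D a e X (insert i P)"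
    thus "c \<in> SS D a e (X - {i}) P" using assms iP unfolding SS_def by auto
  qed
  show "SS D a e X P \<inter> SS D a e X (insert i P) = {}"
  proof (rule ccontr)
    assume "SS D a e X P \<inter> SS D a e X (insert i P) \<noteq> {}"
    then obtain c where c: "c \<in> SS D a e X P" "c \<in> SS D a e X (insert i P)" by blast
    have ni: "\<not> isl (e i)" using assms(2) by simp
    have "AA a (Inl c) (e i) \<longleftrightarrow> i \<in> P" using c(1) assms(1) ni unfolding SS_def by blast
    moreover have "AA a (Inl c) (e i) \<longleftrightarrow> i \<in> insert i P" using c(2) assms(1) ni unfolding SS_def by blast
    ultimately show False using iP by simp
  qed
qed

lemma SS_remove_center:
  assumes "i \<in> X" "e i = Inl c"
  shows "SS D a e (X - {i}) P = SS D a e X P \<union> {c'. c' = c \<and> c \<in> SS D a e (X - {i}) P}"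
    "c \<notin> SS D a e X P"
proof -
  show "c \<notin> SS D a e X P" using assms unfolding SS_def by auto
  show "SS D a e (X - {i}) P = SS D a e X P \<union> {c'. c' = c \<and> c \<in> SS D a e (X - {i}) P}"
  proof (intro equalityI subsetI)
    fix x assume x: "x \<in> SS D a e (X - {i}) P"
    show "x \<in> SS D a e X P \<union> {c'. c' = c \<and> c \<in> SS D a e (X - {i}) P}"
    proof (cases "x = c")
      case True thus ?thesis using x by simp
    next
      case False
      hence "x \<in> SS D a e X P" using x assms unfolding SS_def by auto
      thus ?thesis by simp
    qed
  next
    fix x assume "x \<in> SS D a e X P \<union> {c'. c' = c \<and> c \<in> SS D a e (X - {i}) P}"
    thus "x \<in> SS D a e (X - {i}) P" unfolding SS_def by auto
  qed
qed

lemma card_SS_remove_center: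
  assumes "i \<in> X" "e i = Inl c"
  shows "card (SS D a e (X - {i}) P) = card (SS D a e X P) + (if c \<in> SS D a e (X - {i}) P then 1 else 0)"
proof -
  note h = SS_remove_center[where e=e and c=c and D=D and a=a and P=P, OF assms]
  show ?thesis
  proof (cases "c \<in> SS D a e (X - {i}) P")
    case True
    hence "SS D a e (X - {i}) P = insert c (SS D a e X P)" using h by auto
    thus ?thesis using h(2) True SS_fin by simp
  next
    case False
    thus ?thesis using h by simp
  qed
qed

lemma Inv_remove:
  assumes H: "Inv D1 a1 D2 a2 r X e1 e2"
  shows "Inv D1 a1 D2 a2 r (X - {i}) e1 e2"
proof (cases "i \<in> X")
  case False thus ?thesis using H by simp
next
  case True
  have h: "finite X" "card X + r \<le> D1" "card X + r \<le> D2"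
    "\<forall>x\<in>X. e1 x \<in> VV D1 \<and> e2 x \<in> VV D2" "\<forall>x\<in>X. isl (e1 x) = isl (e2 x)"
    "\<forall>x\<in>X. \<forall>y\<in>X. (e1 x = e1 y) = (e2 x = e2 y)"
    "\<forall>x\<in>X. \<forall>y\<in>X. AA a1 (e1 x) (e1 y) = AA a2 (e2 x) (e2 y)"
    "\<forall>P. P \<subseteq> X \<longrightarrow> thr r (card (SS D1 a1 e1 X P)) (card (SS D2 a2 e2 X P))"
    using H unfolding Inv_def by blast+
  have cnt: "thr r (card (SS D1 a1 e1 (X - {i}) P)) (card (SS D2 a2 e2 (X - {i}) P))"
    if P: "P \<subseteq> X - {i}" for P
  proof (cases "isl (e1 i)")
    case True
    then obtain c1 where c1: "e1 i = Inl c1" by (cases "e1 i") auto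
    have "isl (e2 i)" using True h(5) \<open>i \<in> X\<close> by auto
    then obtain c2 where c2: "e2 i = Inl c2" by (cases "e2 i") auto
    have c1D: "c1 < D1" using h(4) \<open>i \<in> X\<close> c1 unfolding VV_def by auto
    have c2D: "c2 < D2" using h(4) \<open>i \<in> X\<close> c2 unfolding VV_def by auto
    have "(c1 \<in> SS D1 a1 e1 (X - {i}) P) = (c2 \<in> SS D2 a2 e2 (X - {i}) P)"
    proof -
      have "(c1 \<in> SS D1 a1 e1 (X - {i}) P) = ((\<forall>x\<in>X - {i}. e1 x \<noteq> e1 i) \<and>
          (\<forall>x\<in>X - {i}. \<not> isl (e1 x) \<longrightarrow> (AA a1 (e1 i) (e1 x) \<longleftrightarrow> x \<in> P)))"
        unfolding SS_def using c1 c1D by auto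
      also have "\<dots> = ((\<forall>x\<in>X - {i}. e2 x \<noteq> e2 i) \<and>
          (\<forall>x\<in>X - {i}. \<not> isl (e2 x) \<longrightarrow> (AA a2 (e2 i) (e2 x) \<longleftrightarrow> x \<in> P)))"
        using h(5,6,7) \<open>i \<in> X\<close> by auto
      also have "\<dots> = (c2 \<in> SS D2 a2 e2 (X - {i}) P)"
        unfolding SS_def using c2 c2D by auto
      finally show ?thesis .
    qed
    moreover have "thr r (card (SS D1 a1 e1 X P)) (card (SS D2 a2 e2 X P))"
      using h(8) P by auto
    ultimately show ?thesis
      using card_SS_remove_center[where e=e1 and c=c1 and D=D1 and a=a1 and P=P, OF \<open>i \<in> X\<close> c1]
        card_SS_remove_center[where e=e2 and c=c2 and D=D2 and a=a2 and P=P, OF \<open>i \<in> X\<close> c2] thr_add1 by simp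
  next
    case False
    then obtain u1 where u1: "e1 i = Inr u1" by (cases "e1 i") auto
    have "\<not> isl (e2 i)" using False h(5) \<open>i \<in> X\<close> by auto
    then obtain u2 where u2: "e2 i = Inr u2" by (cases "e2 i") auto
    note s1 = SS_remove_leaf[where e=e1 and u=u1 and D=D1 and a=a1, OF \<open>i \<in> X\<close> u1 P]
    note s2 = SS_remove_leaf[where e=e2 and u=u2 and D=D2 and a=a2, OF \<open>i \<in> X\<close> u2 P]
    have "card (SS D1 a1 e1 (X - {i}) P) = card (SS D1 a1 e1 X P) + card (SS D1 a1 e1 X (insert i P))"
      using s1 SS_fin by (simp add: card_Un_disjoint)
    moreover have "card (SS D2 a2 e2 (X - {i}) P) = card (SS D2 a2 e2 X P) + card (SS D2 a2 e2 X (insert i P))"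
      using s2 SS_fin by (simp add: card_Un_disjoint)
    moreover have "insert i P \<subseteq> X" "P \<subseteq> X" using P \<open>i \<in> X\<close> by auto
    ultimately show ?thesis using h(8) thr_add by metis
  qed
  have "card (X - {i}) \<le> card X" using h(1) by (simp add: card_Diff1_le)
  thus ?thesis unfolding Inv_def using h cnt by auto
qed



definition kk :: "nat \<Rightarrow> nat \<Rightarrow> nat \<Rightarrow> nat \<Rightarrow> nat" where
  "kk r n1 n2 k1 = (if n1 = n2 then k1 else if k1 < 2^r then k1
      else if n1 - k1 < 2^r then n2 - (n1 - k1) else 2^r)"

lemma kk_props:
  assumes "thr (Suc r) n1 n2" "k1 \<le> n1"
  shows "kk r n1 n2 k1 \<le> n2" "thr r k1 (kk r n1 n2 k1)" "thr r (n1 - k1) (n2 - kk r n1 n2 k1)"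
proof -
  define T where "T = (2::nat)^r"
  have T2: "(2::nat)^Suc r = 2 * T" unfolding T_def by simp
  have H: "n1 = n2 \<or> (2 * T \<le> n1 \<and> 2 * T \<le> n2)" using assms(1) unfolding thr_def T2 .
  have k: "kk r n1 n2 k1 = (if n1 = n2 then k1 else if k1 < T then k1
      else if n1 - k1 < T then n2 - (n1 - k1) else T)" unfolding kk_def T_def by simp
  show "kk r n1 n2 k1 \<le> n2" using H assms(2) unfolding k by auto
  show "thr r k1 (kk r n1 n2 k1)" using H assms(2) unfolding k thr_def T_def[symmetric] by auto
  show "thr r (n1 - k1) (n2 - kk r n1 n2 k1)" using H assms(2) unfolding k thr_def T_def[symmetric] by auto
qed

lemma Inv_insertI:
  assumes H: "Inv D1 a1 D2 a2 (Suc r) X e1 e2" and i: "i \<notin> X"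
    and vw: "v \<in> VV D1" "w \<in> VV D2" "isl v = isl w"
    and eq: "\<forall>x\<in>X. (e1 x = v) = (e2 x = w)"
    and ad: "\<forall>x\<in>X. AA a1 (e1 x) v = AA a2 (e2 x) w"
    and cnt: "\<forall>P. P \<subseteq> insert i X \<longrightarrow> thr r (card (SS D1 a1 (e1(i:=v)) (insert i X) P)) (card (SS D2 a2 (e2(i:=w)) (insert i X) P))"
  shows "Inv D1 a1 D2 a2 r (insert i X) (e1(i:=v)) (e2(i:=w))"
proof -
  have h: "finite X" "card X + Suc r \<le> D1" "card X + Suc r \<le> D2"
    "\<forall>x\<in>X. e1 x \<in> VV D1 \<and> e2 x \<in> VV D2" "\<forall>x\<in>X. isl (e1 x) = isl (e2 x)"
    "\<forall>x\<in>X. \<forall>y\<in>X. (e1 x = e1 y) = (e2 x = e2 y)"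
    "\<forall>x\<in>X. \<forall>y\<in>X. AA a1 (e1 x) (e1 y) = AA a2 (e2 x) (e2 y)"
    using H unfolding Inv_def by blast+
  have c: "card (insert i X) = Suc (card X)" using h(1) i by simp
  have vv: "\<not> AA a1 v v" "\<not> AA a2 w w" using AA_isl by auto
  have ad2: "\<forall>x\<in>X. AA a1 v (e1 x) = AA a2 w (e2 x)" using ad AA_sym by metis
  have ii: "i \<notin> X" by fact
  show ?thesis unfolding Inv_def
  proof (intro conjI)
    show "\<forall>x\<in>insert i X. \<forall>y\<in>insert i X. ((e1(i := v)) x = (e1(i := v)) y) = ((e2(i := w)) x = (e2(i := w)) y)"
      using h(6) eq ii by (auto; metis)
    show "\<forall>x\<in>insert i X. \<forall>y\<in>insert i X. AA a1 ((e1(i := v)) x) ((e1(i := v)) y) = AA a2 ((e2(i := w)) x) ((e2(i := w)) y)"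
      using h(7) ad ad2 vv ii by auto
  qed (use h c vw cnt ii in auto)
qed

lemma SS_insert_old:
  assumes "i \<notin> X" "j \<in> X"
  shows "SS D a (e(i := e j)) (insert i X) P = (if isl (e j) \<or> (j \<in> P \<longleftrightarrow> i \<in> P) then SS D a e X (P - {i}) else {})"
proof -
  have ji: "j \<noteq> i" using assms by auto
  have "SS D a (e(i := e j)) (insert i X) P =
     {c \<in> SS D a e X (P - {i}). e j \<noteq> Inl c \<and> (\<not> isl (e j) \<longrightarrow> (AA a (Inl c) (e j) \<longleftrightarrow> i \<in> P))}"
    using SS_insert[OF assms(1)] by simp
  also have "\<dots> = {c \<in> SS D a e X (P - {i}). (\<not> isl (e j) \<longrightarrow> (j \<in> P \<longleftrightarrow> i \<in> P))}"
    using assms ji unfolding SS_def by auto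
  finally show ?thesis by auto
qed

lemma Inv_ext_old:
  assumes H: "Inv D1 a1 D2 a2 (Suc r) X e1 e2" and i: "i \<notin> X" and j: "j \<in> X"
  shows "Inv D1 a1 D2 a2 r (insert i X) (e1(i := e1 j)) (e2(i := e2 j))"
proof (rule Inv_insertI[OF H i])
  have h: "\<forall>x\<in>X. e1 x \<in> VV D1 \<and> e2 x \<in> VV D2" "\<forall>x\<in>X. isl (e1 x) = isl (e2 x)"
    "\<forall>x\<in>X. \<forall>y\<in>X. (e1 x = e1 y) = (e2 x = e2 y)"
    "\<forall>x\<in>X. \<forall>y\<in>X. AA a1 (e1 x) (e1 y) = AA a2 (e2 x) (e2 y)"
    "\<forall>P. P \<subseteq> X \<longrightarrow> thr (Suc r) (card (SS D1 a1 e1 X P)) (card (SS D2 a2 e2 X P))"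
    using H unfolding Inv_def by blast+
  show "e1 j \<in> VV D1" "e2 j \<in> VV D2" "isl (e1 j) = isl (e2 j)" using h j by auto
  show "\<forall>x\<in>X. (e1 x = e1 j) = (e2 x = e2 j)" using h j by auto
  show "\<forall>x\<in>X. AA a1 (e1 x) (e1 j) = AA a2 (e2 x) (e2 j)" using h j by auto
  show "\<forall>P. P \<subseteq> insert i X \<longrightarrow> thr r (card (SS D1 a1 (e1(i:=e1 j)) (insert i X) P)) (card (SS D2 a2 (e2(i:=e2 j)) (insert i X) P))"
  proof (intro allI impI)
    fix P assume P: "P \<subseteq> insert i X"
    have PX: "P - {i} \<subseteq> X" using P by auto
    show "thr r (card (SS D1 a1 (e1(i:=e1 j)) (insert i X) P)) (card (SS D2 a2 (e2(i:=e2 j)) (insert i X) P))"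
      unfolding SS_insert_old[OF i j] using h(2) j h(5) PX thr_Suc by (auto simp: thr_def)
  qed
qed

lemma Inv_ext_center:
  assumes H: "Inv D1 a1 D2 a2 (Suc r) X e1 e2" and i: "i \<notin> X"
    and c0: "c0 < D1" "Inl c0 \<notin> e1 ` X"
  shows "\<exists>w\<in>VV D2. Inv D1 a1 D2 a2 r (insert i X) (e1(i := Inl c0)) (e2(i := w))"
proof -
  have h: "\<forall>x\<in>X. e1 x \<in> VV D1 \<and> e2 x \<in> VV D2" "\<forall>x\<in>X. isl (e1 x) = isl (e2 x)"
    "\<forall>x\<in>X. \<forall>y\<in>X. (e1 x = e1 y) = (e2 x = e2 y)"
    "\<forall>x\<in>X. \<forall>y\<in>X. AA a1 (e1 x) (e1 y) = AA a2 (e2 x) (e2 y)"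
    "\<forall>P. P \<subseteq> X \<longrightarrow> thr (Suc r) (card (SS D1 a1 e1 X P)) (card (SS D2 a2 e2 X P))"
    using H unfolding Inv_def by blast+
  define P0 where "P0 = {x\<in>X. \<not> isl (e1 x) \<and> AA a1 (Inl c0) (e1 x)}"
  have P0X: "P0 \<subseteq> X" unfolding P0_def by auto
  have c0n: "\<forall>x\<in>X. e1 x \<noteq> Inl c0" using c0(2) by force
  have c0S: "c0 \<in> SS D1 a1 e1 X P0" using c0(1) c0n unfolding SS_def P0_def by auto
  hence "card (SS D1 a1 e1 X P0) \<ge> 1"
    using SS_fin by (metis One_nat_def Suc_leI card_gt_0_iff empty_iff)
  hence "card (SS D2 a2 e2 X P0) \<ge> 1" using h(5) P0X unfolding thr_def
    by (metis le_trans one_le_power one_le_numeral)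
  then obtain c1 where c1S: "c1 \<in> SS D2 a2 e2 X P0"
    by (metis card.empty ex_in_conv not_one_le_zero)
  have c1D: "c1 < D2" using c1S unfolding SS_def by auto
  show ?thesis
  proof (rule bexI[of _ "Inl c1"], rule Inv_insertI[OF H i])
    show "Inl c0 \<in> VV D1" "Inl c1 \<in> VV D2" using c0 c1D unfolding VV_def by auto
    show "isl (Inl c0 :: vx) = isl (Inl c1 :: vx)" by simp
    show "\<forall>x\<in>X. (e1 x = Inl c0) = (e2 x = Inl c1)" using c0n c1S unfolding SS_def by auto
    show "\<forall>x\<in>X. AA a1 (e1 x) (Inl c0) = AA a2 (e2 x) (Inl c1)"
    proof
      fix x assume x: "x \<in> X"
      show "AA a1 (e1 x) (Inl c0) = AA a2 (e2 x) (Inl c1)"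
      proof (cases "isl (e1 x)")
        case True
        thus ?thesis using h(2) x AA_isl[of "e1 x" "Inl c0"] AA_isl[of "e2 x" "Inl c1"] by auto
      next
        case False
        hence "AA a1 (Inl c0) (e1 x) = (x \<in> P0)" unfolding P0_def using x by auto
        moreover have "AA a2 (Inl c1) (e2 x) = (x \<in> P0)" using c1S x False h(2) unfolding SS_def by auto
        ultimately show ?thesis using AA_sym by metis
      qed
    qed
    show "\<forall>P. P \<subseteq> insert i X \<longrightarrow> thr r (card (SS D1 a1 (e1(i:=Inl c0)) (insert i X) P)) (card (SS D2 a2 (e2(i:=Inl c1)) (insert i X) P))"
    proof (intro allI impI)
      fix P assume P: "P \<subseteq> insert i X"
      define Q where "Q = P - {i}"
      have QX: "Q \<subseteq> X" using P unfolding Q_def by auto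
      have e1: "SS D1 a1 (e1(i:=Inl c0)) (insert i X) P = SS D1 a1 e1 X Q - {c0}"
        unfolding SS_insert[OF i] Q_def by auto
      have e2: "SS D2 a2 (e2(i:=Inl c1)) (insert i X) P = SS D2 a2 e2 X Q - {c1}"
        unfolding SS_insert[OF i] Q_def by auto
      have ind: "(c0 \<in> SS D1 a1 e1 X Q) = (c1 \<in> SS D2 a2 e2 X Q)"
        using SS_other[OF c0S, of Q] SS_other[OF c1S, of Q] h(2) by auto
      have "thr (Suc r) (card (SS D1 a1 e1 X Q)) (card (SS D2 a2 e2 X Q))" using h(5) QX by auto
      hence "thr r (card (SS D1 a1 e1 X Q) - (if c0 \<in> SS D1 a1 e1 X Q then 1 else 0))
                   (card (SS D2 a2 e2 X Q) - (if c1 \<in> SS D2 a2 e2 X Q then 1 else 0))"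
        using thr_minus ind by simp
      thus "thr r (card (SS D1 a1 (e1(i:=Inl c0)) (insert i X) P)) (card (SS D2 a2 (e2(i:=Inl c1)) (insert i X) P))"
        unfolding e1 e2 using SS_fin ind by (auto simp: card_Diff_singleton_if split: if_splits)
    qed
  qed (use c1D in \<open>simp add: VV_def\<close>)
qed



lemma card_filter_split:
  assumes "finite S"
  shows "card {c \<in> S. \<not> p c} = card S - card {c \<in> S. p c}"
proof -
  have "{c \<in> S. \<not> p c} = S - {c \<in> S. p c}" by auto
  thus ?thesis using assms by (simp add: card_Diff_subset)
qed

lemma Inv_ext_leaf:
  assumes a2: "2 \<le> a2" "a2 \<le> 3"
    and H: "Inv D1 a1 D2 a2 (Suc r) X e1 e2" and i: "i \<notin> X"
    and u: "u \<in> LV D1" "Inr u \<notin> e1 ` X"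
  shows "\<exists>w\<in>VV D2. Inv D1 a1 D2 a2 r (insert i X) (e1(i := Inr u)) (e2(i := w))"
proof -
  have h: "finite X" "card X + Suc r \<le> D2"
    "\<forall>x\<in>X. e1 x \<in> VV D1 \<and> e2 x \<in> VV D2" "\<forall>x\<in>X. isl (e1 x) = isl (e2 x)"
    "\<forall>x\<in>X. \<forall>y\<in>X. (e1 x = e1 y) = (e2 x = e2 y)"
    "\<forall>x\<in>X. \<forall>y\<in>X. AA a1 (e1 x) (e1 y) = AA a2 (e2 x) (e2 y)"
    "\<forall>P. P \<subseteq> X \<longrightarrow> thr (Suc r) (card (SS D1 a1 e1 X P)) (card (SS D2 a2 e2 X P))"
    using H unfolding Inv_def by blast+
  define n1 where "n1 Q = card (SS D1 a1 e1 X Q)" for Q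
  define n2 where "n2 Q = card (SS D2 a2 e2 X Q)" for Q
  define k1 where "k1 Q = card {c \<in> SS D1 a1 e1 X Q. u c < a1}" for Q
  define k2 where "k2 Q = kk r (n1 Q) (n2 Q) (k1 Q)" for Q
  have k1n1: "k1 Q \<le> n1 Q" for Q unfolding k1_def n1_def using SS_fin by (intro card_mono) auto
  have kp: "k2 Q \<le> n2 Q" "thr r (k1 Q) (k2 Q)" "thr r (n1 Q - k1 Q) (n2 Q - k2 Q)" if "Q \<subseteq> X" for Q
    using kk_props[OF h(7)[rule_format, OF that] k1n1[of Q, unfolded n1_def]] that
    unfolding k2_def n1_def n2_def by auto
  define T where "T Q = (SOME T. T \<subseteq> SS D2 a2 e2 X Q \<and> card T = k2 Q)" for Q
  have T: "T Q \<subseteq> SS D2 a2 e2 X Q \<and> card (T Q) = k2 Q" if "Q \<subseteq> X" for Q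
  proof -
    have "k2 Q \<le> card (SS D2 a2 e2 X Q)" using kp(1)[OF that] unfolding n2_def .
    then obtain T0 where "T0 \<subseteq> SS D2 a2 e2 X Q" "card T0 = k2 Q" by (rule obtain_subset_with_card_n)
    hence "\<exists>T. T \<subseteq> SS D2 a2 e2 X Q \<and> card T = k2 Q" by blast
    thus ?thesis unfolding T_def by (rule someI_ex)
  qed
  define Qc where "Qc c' = {x \<in> X. \<not> isl (e2 x) \<and> AA a2 (Inl c') (e2 x)}" for c'
  define bit where "bit c' = (if \<exists>x\<in>X. e2 x = Inl c' then AA a1 (e1 (SOME x. x \<in> X \<and> e2 x = Inl c')) (Inr u)
      else c' \<in> T (Qc c'))" for c'
  define Cand where "Cand = PiE {..<D2} (\<lambda>c'. if bit c' then {0,1::nat} else {3,4})"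
  define Bad where "Bad = {w. Inr w \<in> e2 ` X}"
  have cardCand: "card Cand = 2 ^ D2"
  proof -
    have "card Cand = (\<Prod>c'\<in>{..<D2}. card (if bit c' then {0,1::nat} else {3,4}))"
      unfolding Cand_def by (simp add: card_PiE)
    also have "\<dots> = (\<Prod>c'\<in>{..<D2}. 2)" by (intro prod.cong) auto
    finally show ?thesis by simp
  qed
  have "Bad \<subseteq> projr ` e2 ` X"
  proof
    fix w assume "w \<in> Bad"
    then obtain x where x: "x \<in> X" "Inr w = e2 x" unfolding Bad_def by auto
    hence "w = projr (e2 x)" by (metis sum.sel(2))
    thus "w \<in> projr ` e2 ` X" using x by blast
  qed
  hence "card Bad \<le> card X" using h(1)
    by (meson card_image_le card_mono finite_imageI le_trans)
  also have "\<dots> < 2 ^ D2" using h(2) by (meson le_trans less_exp not_le le_add1)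
  finally have "card Bad < card Cand" using cardCand by simp
  hence "\<not> Cand \<subseteq> Bad"
    using h(1) by (metis card_mono finite_imageI finite_subset not_le \<open>Bad \<subseteq> projr ` e2 ` X\<close>)
  then obtain u' where u'C: "u' \<in> Cand" and u'B: "u' \<notin> Bad" by blast
  have u'bit: "(u' c' < a2) = bit c'" if "c' < D2" for c'
  proof -
    have "u' c' \<in> (if bit c' then {0,1::nat} else {3,4})" using PiE_mem[OF u'C[unfolded Cand_def], of c'] that by simp
    thus ?thesis using a2 by (cases "bit c'") auto
  qed
  have "Cand \<subseteq> LV D2" unfolding Cand_def LV_def by (rule PiE_mono) auto
  hence u'LV: "u' \<in> LV D2" using u'C by blast
  show ?thesis
  proof (rule bexI[of _ "Inr u'"], rule Inv_insertI[OF H i])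
    show "Inr u \<in> VV D1" "Inr u' \<in> VV D2" using u u'LV unfolding VV_def by auto
    show "isl (Inr u :: vx) = isl (Inr u' :: vx)" by simp
    have un: "\<forall>x\<in>X. e1 x \<noteq> Inr u" using u(2) by force
    have u'n: "\<forall>x\<in>X. e2 x \<noteq> Inr u'" using u'B unfolding Bad_def by force
    show "\<forall>x\<in>X. (e1 x = Inr u) = (e2 x = Inr u')" using un u'n by auto
    show "\<forall>x\<in>X. AA a1 (e1 x) (Inr u) = AA a2 (e2 x) (Inr u')"
    proof
      fix x assume x: "x \<in> X"
      show "AA a1 (e1 x) (Inr u) = AA a2 (e2 x) (Inr u')"
      proof (cases "isl (e2 x)")
        case False
        thus ?thesis using h(4) x AA_isl[of "e1 x" "Inr u"] AA_isl[of "e2 x" "Inr u'"] by auto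
      next
        case True
        then obtain c' where c': "e2 x = Inl c'" by (cases "e2 x") auto
        have c'D: "c' < D2" using h(3) x c' unfolding VV_def by auto
        have ex: "\<exists>x\<in>X. e2 x = Inl c'" using x c' by auto
        define x0 where "x0 = (SOME x. x \<in> X \<and> e2 x = Inl c')"
        have x0: "x0 \<in> X \<and> e2 x0 = Inl c'" unfolding x0_def using someI_ex[of "\<lambda>x. x \<in> X \<and> e2 x = Inl c'"] ex by blast
        have "e1 x0 = e1 x" using h(5) x0 x c' by auto
        hence "bit c' = AA a1 (e1 x) (Inr u)" unfolding bit_def using ex x0_def by simp
        thus ?thesis using c' u'bit[OF c'D] by simp
      qed
    qed
    show "\<forall>P. P \<subseteq> insert i X \<longrightarrow> thr r (card (SS D1 a1 (e1(i:=Inr u)) (insert i X) P)) (card (SS D2 a2 (e2(i:=Inr u')) (insert i X) P))"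
    proof (intro allI impI)
      fix P assume P: "P \<subseteq> insert i X"
      define Q where "Q = P - {i}"
      have QX: "Q \<subseteq> X" using P unfolding Q_def by auto
      define Qn where "Qn = {x\<in>X. \<not> isl (e2 x) \<and> x \<in> Q}"
      have QnX: "Qn \<subseteq> X" unfolding Qn_def by auto
      have Qn1: "Qn = {x\<in>X. \<not> isl (e1 x) \<and> x \<in> Q}" unfolding Qn_def using h(4) by auto
      have S1n: "SS D1 a1 e1 X Qn = SS D1 a1 e1 X Q" using SS_norm[of D1 a1 e1 X Q] Qn1 by simp
      have S2n: "SS D2 a2 e2 X Qn = SS D2 a2 e2 X Q" using SS_norm[of D2 a2 e2 X Q] unfolding Qn_def by simp
      have k2n: "k2 Qn = k2 Q" unfolding k2_def n1_def n2_def k1_def S1n S2n ..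
      have e1: "SS D1 a1 (e1(i:=Inr u)) (insert i X) P = {c \<in> SS D1 a1 e1 X Q. (u c < a1) = (i \<in> P)}"
        unfolding SS_insert[OF i] Q_def by auto
      have e2: "SS D2 a2 (e2(i:=Inr u')) (insert i X) P = {c \<in> SS D2 a2 e2 X Q. (u' c < a2) = (i \<in> P)}"
        unfolding SS_insert[OF i] Q_def by auto
      have bitT: "bit c' = (c' \<in> T Qn)" if c'S: "c' \<in> SS D2 a2 e2 X Q" for c'
      proof -
        have "\<not> (\<exists>x\<in>X. e2 x = Inl c')" using c'S unfolding SS_def by auto
        moreover have "Qc c' = Qn" using c'S unfolding Qc_def Qn_def SS_def by auto
        ultimately show ?thesis unfolding bit_def by simp
      qed
      have TS: "T Qn \<subseteq> SS D2 a2 e2 X Q" using T[OF QnX] S2n by simp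
      have "{c \<in> SS D2 a2 e2 X Q. u' c < a2} = T Qn"
      proof -
        have "{c \<in> SS D2 a2 e2 X Q. u' c < a2} = {c \<in> SS D2 a2 e2 X Q. c \<in> T Qn}"
          using bitT u'bit unfolding SS_def by auto
        thus ?thesis using TS by auto
      qed
      hence ck2: "card {c \<in> SS D2 a2 e2 X Q. u' c < a2} = k2 Q" using T[OF QnX] k2n by simp
      show "thr r (card (SS D1 a1 (e1(i:=Inr u)) (insert i X) P)) (card (SS D2 a2 (e2(i:=Inr u')) (insert i X) P))"
      proof (cases "i \<in> P")
        case True
        thus ?thesis unfolding e1 e2 using kp(2)[OF QX] ck2 unfolding k1_def by simp
      next
        case False
        have "card (SS D1 a1 (e1(i:=Inr u)) (insert i X) P) = n1 Q - k1 Q"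
          unfolding e1 n1_def k1_def using False card_filter_split[OF SS_fin] by simp
        moreover have "card (SS D2 a2 (e2(i:=Inr u')) (insert i X) P) = n2 Q - k2 Q"
          unfolding e2 n2_def using False card_filter_split[OF SS_fin] ck2 by simp
        ultimately show ?thesis using kp(3)[OF QX] by simp
      qed
    qed
  qed (use u'LV in \<open>simp add: VV_def\<close>)
qed



fun qd :: "form \<Rightarrow> nat" where
  "qd (FEq s t) = 0"
| "qd (FAdj s t) = 0"
| "qd (FNot p) = qd p"
| "qd (FAnd p q) = max (qd p) (qd q)"
| "qd (FEx i p) = Suc (qd p)"

lemma Inv_ext:
  assumes a2: "2 \<le> a2" "a2 \<le> 3"
    and H: "Inv D1 a1 D2 a2 (Suc r) X e1 e2" and i: "i \<notin> X" and v: "v \<in> VV D1"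
  shows "\<exists>w\<in>VV D2. Inv D1 a1 D2 a2 r (insert i X) (e1(i := v)) (e2(i := w))"
proof (cases "v \<in> e1 ` X")
  case True
  then obtain j where j: "j \<in> X" "v = e1 j" by auto
  have "e2 j \<in> VV D2" using H j unfolding Inv_def by auto
  thus ?thesis using Inv_ext_old[OF H i j(1)] j(2) by blast
next
  case False
  show ?thesis
  proof (cases v)
    case (Inl c0)
    have "c0 < D1" using v Inl unfolding VV_def by auto
    thus ?thesis using Inv_ext_center[OF H i, of c0] False Inl by simp
  next
    case (Inr u)
    have "u \<in> LV D1" using v Inr unfolding VV_def by auto
    thus ?thesis using Inv_ext_leaf[OF a2 H i, of u] False Inr by simp
  qed
qed

lemma EF:
  assumes a: "2 \<le> a1" "a1 \<le> 3" "2 \<le> a2" "a2 \<le> 3"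
  shows "no_root \<phi> \<Longrightarrow> qd \<phi> \<le> r \<Longrightarrow> fv \<phi> \<subseteq> X \<Longrightarrow> Inv D1 a1 D2 a2 r X e1 e2 \<Longrightarrow>
     sat' (VV D1) (AA a1) r1 e1 \<phi> = sat' (VV D2) (AA a2) r2 e2 \<phi>"
proof (induction \<phi> arbitrary: r X e1 e2)
  case (FEq s t)
  then obtain x y where xy: "s = Var x" "t = Var y" by (cases s; cases t) auto
  thus ?case using FEq.prems unfolding Inv_def by auto
next
  case (FAdj s t)
  then obtain x y where xy: "s = Var x" "t = Var y" by (cases s; cases t) auto
  thus ?case using FAdj.prems unfolding Inv_def by auto
next
  case (FNot p)
  thus ?case by simp
next
  case (FAnd p q)
  have "sat' (VV D1) (AA a1) r1 e1 p = sat' (VV D2) (AA a2) r2 e2 p"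
    using FAnd.IH(1)[of r X e1 e2] FAnd.prems by auto
  moreover have "sat' (VV D1) (AA a1) r1 e1 q = sat' (VV D2) (AA a2) r2 e2 q"
    using FAnd.IH(2)[of r X e1 e2] FAnd.prems by auto
  ultimately show ?case by simp
next
  case (FEx i p)
  obtain r' where r: "r = Suc r'" "qd p \<le> r'" using FEx.prems(2) by (cases r) auto
  have H0: "Inv D1 a1 D2 a2 (Suc r') (X - {i}) e1 e2" using Inv_remove FEx.prems(4) r(1) by blast
  have np: "no_root p" using FEx.prems(1) by simp
  have fvp: "fv p \<subseteq> insert i (X - {i})" using FEx.prems(3) by auto
  have ni: "i \<notin> X - {i}" by simp
  show ?case
  proof
    assume "sat' (VV D1) (AA a1) r1 e1 (FEx i p)"
    then obtain v where v: "v \<in> VV D1" "sat' (VV D1) (AA a1) r1 (e1(i:=v)) p" by auto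
    obtain w where w: "w \<in> VV D2" "Inv D1 a1 D2 a2 r' (insert i (X - {i})) (e1(i := v)) (e2(i := w))"
      using Inv_ext[OF a(3,4) H0 ni v(1)] by blast
    have "sat' (VV D2) (AA a2) r2 (e2(i:=w)) p" using FEx.IH[OF np r(2) fvp w(2)] v(2) by blast
    thus "sat' (VV D2) (AA a2) r2 e2 (FEx i p)" using w(1) by auto
  next
    assume "sat' (VV D2) (AA a2) r2 e2 (FEx i p)"
    then obtain w where w: "w \<in> VV D2" "sat' (VV D2) (AA a2) r2 (e2(i:=w)) p" by auto
    obtain v where v: "v \<in> VV D1" "Inv D2 a2 D1 a1 r' (insert i (X - {i})) (e2(i := w)) (e1(i := v))"
      using Inv_ext[OF a(1,2) Inv_sym[OF H0] ni w(1)] by blast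
    have "sat' (VV D1) (AA a1) r1 (e1(i:=v)) p" using FEx.IH[OF np r(2) fvp Inv_sym[OF v(2)]] w(2) by blast
    thus "sat' (VV D1) (AA a1) r1 e1 (FEx i p)" using v(1) by auto
  qed
qed



lemma SS_leaf:
  assumes "\<forall>x\<in>X. \<not> isl (e x)"
  shows "c \<in> SS D a e X P \<longleftrightarrow> c < D \<and> (\<forall>x\<in>X. (projr (e x) c < a \<longleftrightarrow> x \<in> P))"
proof -
  have h1: "\<not> isl v \<Longrightarrow> AA a (Inl c) v = (projr v c < a)" for v by (cases v) auto
  have h2: "\<not> isl v \<Longrightarrow> v \<noteq> Inl c" for v by (cases v) auto
  show ?thesis unfolding SS_def using assms h1 h2 by auto
qed

definition blk :: "nat \<Rightarrow> nat \<Rightarrow> nat set" where "blk B j = {j*B ..< j*B + B}"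

lemma few_block:
  assumes "finite S" "card S < M" "M * B \<le> D"
  shows "\<exists>j<M. \<forall>c\<in>blk B j. c \<notin> S"
proof (rule ccontr)
  assume "\<not> (\<exists>j<M. \<forall>c\<in>blk B j. c \<notin> S)"
  hence "\<forall>j<M. \<exists>c. c \<in> blk B j \<and> c \<in> S" by blast
  then obtain f where f: "\<forall>j<M. f j \<in> blk B j \<and> f j \<in> S" by metis
  have inj: "inj_on f {..<M}"
  proof (rule inj_onI)
    fix j1 j2 assume j: "j1 \<in> {..<M}" "j2 \<in> {..<M}" "f j1 = f j2"
    have b1: "j1 * B \<le> f j1" "f j1 < j1 * B + B" using f j unfolding blk_def by auto
    have b2: "j2 * B \<le> f j2" "f j2 < j2 * B + B" using f j unfolding blk_def by auto
    show "j1 = j2"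
    proof (rule ccontr)
      assume "j1 \<noteq> j2"
      hence "j1 < j2 \<or> j2 < j1" by auto
      thus False
      proof
        assume "j1 < j2" hence "Suc j1 \<le> j2" by simp
        hence "Suc j1 * B \<le> j2 * B" by (rule mult_right_mono) simp
        thus False using b1 b2 j(3) by simp
      next
        assume "j2 < j1" hence "Suc j2 \<le> j1" by simp
        hence "Suc j2 * B \<le> j1 * B" by (rule mult_right_mono) simp
        thus False using b1 b2 j(3) by simp
      qed
    qed
  qed
  have "f ` {..<M} \<subseteq> S" using f by auto
  hence "card (f ` {..<M}) \<le> card S" using assms(1) by (rule card_mono[rotated])
  thus False using card_image[OF inj] assms(2) by simp
qed

lemma blk_sub: "j < M \<Longrightarrow> M * B \<le> D \<Longrightarrow> blk B j \<subseteq> {..<D}"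
proof -
  assume j: "j < M" "M * B \<le> D"
  have "j * B + B = Suc j * B" by simp
  also have "\<dots> \<le> M * B" using j(1) by (intro mult_right_mono) auto
  finally show ?thesis using j(2) unfolding blk_def by auto
qed

lemma card_blk: "card (blk B j) = B" unfolding blk_def by simp

lemma card_LV: "card (LV D) = 5 ^ D" unfolding LV_def by (simp add: card_PiE)

lemma block_bound:
  assumes X: "finite X" and a: "1 \<le> a" "a \<le> 4" and j: "j < M" "M * B \<le> D"
  shows "card {e \<in> X \<rightarrow>\<^sub>E Inr ` LV D. \<forall>c\<in>blk B j. c \<notin> SS D a e X P}
     \<le> (5 ^ card X - 1) ^ B * (5 ^ card X) ^ (D - B)"
proof -
  define W where "W = X \<rightarrow>\<^sub>E {..<5::nat}"
  define G where "G = {w \<in> W. \<forall>x\<in>X. (w x < a \<longleftrightarrow> x \<in> P)}"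
  define Z where "Z = {e \<in> X \<rightarrow>\<^sub>E Inr ` LV D. \<forall>c\<in>blk B j. c \<notin> SS D a e X P}"
  define Tg where "Tg = PiE {..<D} (\<lambda>c. if c \<in> blk B j then W - G else W)"
  define \<tau> where "\<tau> e = (\<lambda>c\<in>{..<D}. \<lambda>x\<in>X. projr (e x) c)" for e :: "nat \<Rightarrow> vx"
  have cW: "card W = 5 ^ card X" unfolding W_def using X by (simp add: card_PiE)
  have fW: "finite W" unfolding W_def using X by (simp add: finite_PiE)
  have w0: "(\<lambda>x\<in>X. if x \<in> P then 0 else 4) \<in> G" unfolding G_def W_def using a by auto
  have GW: "G \<subseteq> W" unfolding G_def by auto
  have cG: "card G \<ge> 1" using w0 fW GW
    by (metis One_nat_def Suc_leI card_gt_0_iff empty_iff finite_subset)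
  have cWG: "card (W - G) \<le> 5 ^ card X - 1"
    using card_Diff_subset[OF finite_subset[OF GW fW] GW] cW cG by simp
  have leaf: "\<forall>x\<in>X. \<not> isl (e x)" if "e \<in> X \<rightarrow>\<^sub>E Inr ` LV D" for e
    using that by (auto simp: PiE_iff)
  have inj: "inj_on \<tau> Z"
  proof (rule inj_onI)
    fix e1 e2 assume e: "e1 \<in> Z" "e2 \<in> Z" "\<tau> e1 = \<tau> e2"
    show "e1 = e2"
    proof (rule PiE_ext)
      show "e1 \<in> X \<rightarrow>\<^sub>E Inr ` LV D" "e2 \<in> X \<rightarrow>\<^sub>E Inr ` LV D" using e unfolding Z_def by auto
      fix x assume x: "x \<in> X"
      obtain u1 where u1: "e1 x = Inr u1" "u1 \<in> LV D" using e(1) x unfolding Z_def by (auto simp: PiE_iff)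
      obtain u2 where u2: "e2 x = Inr u2" "u2 \<in> LV D" using e(2) x unfolding Z_def by (auto simp: PiE_iff)
      have "u1 = u2"
      proof (rule PiE_ext)
        show "u1 \<in> {..<D} \<rightarrow>\<^sub>E {..<5}" "u2 \<in> {..<D} \<rightarrow>\<^sub>E {..<5}" using u1 u2 unfolding LV_def by auto
        fix c assume c: "c \<in> {..<D}"
        have "\<tau> e1 c x = \<tau> e2 c x" using e(3) by simp
        thus "u1 c = u2 c" using c x u1 u2 unfolding \<tau>_def by simp
      qed
      thus "e1 x = e2 x" using u1 u2 by simp
    qed
  qed
  have sub: "\<tau> ` Z \<subseteq> Tg"
  proof
    fix t assume "t \<in> \<tau> ` Z"
    then obtain e where e: "e \<in> Z" "t = \<tau> e" by auto
    have eL: "e \<in> X \<rightarrow>\<^sub>E Inr ` LV D" using e unfolding Z_def by auto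
    have lf: "\<forall>x\<in>X. \<not> isl (e x)" using leaf[OF eL] .
    have vals: "projr (e x) c < 5" if xc: "x \<in> X" "c < D" for x c
    proof -
      obtain u where "e x = Inr u" "u \<in> LV D" using eL xc(1) by (auto simp: PiE_iff)
      thus ?thesis using xc(2) unfolding LV_def by auto
    qed
    show "t \<in> Tg" unfolding Tg_def e(2)
    proof (rule PiE_I)
      fix c assume c: "c \<in> {..<D}"
      have inW: "\<tau> e c \<in> W" unfolding W_def \<tau>_def using c vals by auto
      show "\<tau> e c \<in> (if c \<in> blk B j then W - G else W)"
      proof (cases "c \<in> blk B j")
        case True
        hence "c \<notin> SS D a e X P" using e(1) unfolding Z_def by auto
        hence "\<not> (\<forall>x\<in>X. (projr (e x) c < a \<longleftrightarrow> x \<in> P))" using SS_leaf[OF lf] c by auto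
        hence "\<tau> e c \<notin> G" unfolding G_def \<tau>_def using c by auto
        thus ?thesis using True inW by simp
      qed (use inW in simp)
    next
      fix c assume "c \<notin> {..<D}"
      thus "\<tau> e c = undefined" unfolding \<tau>_def by simp
    qed
  qed
  have "card Z \<le> card Tg"
    using card_image[OF inj] card_mono[OF _ sub] fW unfolding Tg_def by (simp add: finite_PiE)
  also have "card Tg = (\<Prod>c\<in>{..<D}. card (if c \<in> blk B j then W - G else W))"
    unfolding Tg_def by (simp add: card_PiE)
  also have "\<dots> = (\<Prod>c\<in>{..<D}. if c \<in> blk B j then card (W - G) else card W)"
    by (intro prod.cong) auto
  also have "\<dots> = card (W - G) ^ card ({..<D} \<inter> {c. c \<in> blk B j}) * card W ^ card ({..<D} \<inter> - {c. c \<in> blk B j})"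
    by (simp add: prod.If_cases)
  also have "card ({..<D} \<inter> {c. c \<in> blk B j}) = B"
    using blk_sub[OF j] card_blk[of B j] by (simp add: Int_absorb1 Collect_mem_eq)
  also have "card ({..<D} \<inter> - {c. c \<in> blk B j}) = D - B"
  proof -
    have "{..<D} \<inter> - {c. c \<in> blk B j} = {..<D} - blk B j" by auto
    thus ?thesis using card_Diff_subset[OF _ blk_sub[OF j]] card_blk[of B j] by (simp add: blk_def)
  qed
  also have "card (W - G) ^ B * card W ^ (D - B) \<le> (5 ^ card X - 1) ^ B * (5 ^ card X) ^ (D - B)"
    by (intro mult_mono power_mono) (use cWG cW in auto)
  finally show ?thesis unfolding Z_def .
qed

lemma finite_LV: "finite (LV D)" unfolding LV_def by (simp add: finite_PiE)

lemma bad_bound: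
  assumes X: "finite X" and a: "1 \<le> a" "a \<le> 4" and M: "M * B \<le> D"
  shows "card {e \<in> X \<rightarrow>\<^sub>E Inr ` LV D. card (SS D a e X P) < M}
     \<le> M * ((5 ^ card X - 1) ^ B * (5 ^ card X) ^ (D - B))"
proof -
  define Z where "Z j = {e \<in> X \<rightarrow>\<^sub>E Inr ` LV D. \<forall>c\<in>blk B j. c \<notin> SS D a e X P}" for j
  have sub: "{e \<in> X \<rightarrow>\<^sub>E Inr ` LV D. card (SS D a e X P) < M} \<subseteq> (\<Union>j\<in>{..<M}. Z j)"
  proof
    fix e assume e: "e \<in> {e \<in> X \<rightarrow>\<^sub>E Inr ` LV D. card (SS D a e X P) < M}"
    then obtain j where "j < M" "\<forall>c\<in>blk B j. c \<notin> SS D a e X P"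
      using few_block[OF SS_fin[of D a e X P] _ M] by auto
    thus "e \<in> (\<Union>j\<in>{..<M}. Z j)" using e unfolding Z_def by auto
  qed
  have fin: "finite (\<Union>j\<in>{..<M}. Z j)"
  proof (rule finite_subset)
    show "(\<Union>j\<in>{..<M}. Z j) \<subseteq> X \<rightarrow>\<^sub>E Inr ` LV D" unfolding Z_def by auto
    show "finite (X \<rightarrow>\<^sub>E Inr ` LV D)" using X finite_LV by (simp add: finite_PiE)
  qed
  have "card {e \<in> X \<rightarrow>\<^sub>E Inr ` LV D. card (SS D a e X P) < M} \<le> card (\<Union>j\<in>{..<M}. Z j)"
    by (rule card_mono[OF fin sub])
  also have "\<dots> \<le> (\<Sum>j\<in>{..<M}. card (Z j))"
    by (rule card_UN_le) simp
  also have "\<dots> \<le> (\<Sum>j\<in>{..<M}. (5 ^ card X - 1) ^ B * (5 ^ card X) ^ (D - B))"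
    by (rule sum_mono) (use block_bound[OF X a _ M] in \<open>auto simp: Z_def\<close>)
  finally show ?thesis by simp
qed



definition generic :: "nat \<Rightarrow> nat \<Rightarrow> nat \<Rightarrow> nat set \<Rightarrow> (nat \<Rightarrow> vx) \<Rightarrow> bool" where
  "generic D a q X e \<longleftrightarrow> (\<forall>x\<in>X. \<not> isl (e x)) \<and> (\<forall>P. P \<subseteq> X \<longrightarrow> 2^q \<le> card (SS D a e X P))"

definition good :: "nat \<Rightarrow> nat \<Rightarrow> nat \<Rightarrow> nat set \<Rightarrow> (nat \<Rightarrow> vx) set" where
  "good D a q X = {e \<in> X \<rightarrow>\<^sub>E VV D. generic D a q X e}"

lemma generic_inj:
  assumes "generic D a q X e" "x \<in> X" "y \<in> X" "x \<noteq> y"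
  shows "e x \<noteq> e y"
proof -
  have "2^q \<le> card (SS D a e X {x})" using assms unfolding generic_def by auto
  hence "SS D a e X {x} \<noteq> {}" by (metis card.empty le_zero_eq power_not_zero zero_neq_numeral)
  then obtain c where c: "c \<in> SS D a e X {x}" by auto
  have "\<not> isl (e x)" "\<not> isl (e y)" using assms unfolding generic_def by auto
  hence "AA a (Inl c) (e x)" "\<not> AA a (Inl c) (e y)" using c assms(2,3,4) unfolding SS_def by auto
  thus ?thesis by auto
qed

lemma gen_Inv:
  assumes X: "finite X" "card X + q \<le> D1" "card X + q \<le> D2"
    and e1: "\<forall>x\<in>X. e1 x \<in> VV D1" "generic D1 a1 q X e1"
    and e2: "\<forall>x\<in>X. e2 x \<in> VV D2" "generic D2 a2 q X e2"
  shows "Inv D1 a1 D2 a2 q X e1 e2"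
proof -
  have l1: "\<forall>x\<in>X. \<not> isl (e1 x)" and l2: "\<forall>x\<in>X. \<not> isl (e2 x)"
    using e1 e2 unfolding generic_def by auto
  have eq: "\<forall>x\<in>X. \<forall>y\<in>X. (e1 x = e1 y) = (e2 x = e2 y)"
    using generic_inj[OF e1(2)] generic_inj[OF e2(2)] by metis
  have ad: "\<forall>x\<in>X. \<forall>y\<in>X. AA a1 (e1 x) (e1 y) = AA a2 (e2 x) (e2 y)"
    using l1 l2 AA_isl by metis
  have th: "\<forall>P. P \<subseteq> X \<longrightarrow> thr q (card (SS D1 a1 e1 X P)) (card (SS D2 a2 e2 X P))"
    using e1(2) e2(2) unfolding generic_def thr_def by auto
  show ?thesis unfolding Inv_def using X e1(1) e2(1) l1 l2 eq ad th by auto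
qed

lemma card_VV: "card (VV D) = D + 5 ^ D"
proof -
  have "card (VV D) = card (Inl ` {..<D} :: vx set) + card ((Inr ` LV D :: vx set) :: vx set)"
    unfolding VV_def by (rule card_Un_disjoint) (auto simp: finite_LV)
  also have "\<dots> = D + 5 ^ D" by (simp add: card_image card_LV)
  finally show ?thesis .
qed

lemma finite_VV: "finite (VV D)" unfolding VV_def by (simp add: finite_LV)

lemma LV_sub_VV: "(Inr ` LV D :: vx set) \<subseteq> VV D" unfolding VV_def by auto

lemma card_good_bound:
  assumes X: "finite X" and a: "1 \<le> a" "a \<le> 4" and M: "2^q * B \<le> D"
  shows "card (X \<rightarrow>\<^sub>E VV D) \<le> card (good D a q X) + (card (X \<rightarrow>\<^sub>E VV D) - card (X \<rightarrow>\<^sub>E (Inr ` LV D :: vx set)))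
      + 2 ^ card X * (2^q * ((5 ^ card X - 1) ^ B * (5 ^ card X) ^ (D - B)))"
proof -
  define bad where "bad P = {e \<in> X \<rightarrow>\<^sub>E (Inr ` LV D :: vx set). card (SS D a e X P) < 2^q}" for P
  have finA: "finite (X \<rightarrow>\<^sub>E VV D)" using X finite_VV by (simp add: finite_PiE)
  have subL: "X \<rightarrow>\<^sub>E (Inr ` LV D :: vx set) \<subseteq> X \<rightarrow>\<^sub>E VV D" using LV_sub_VV by (intro PiE_mono) auto
  have cover: "X \<rightarrow>\<^sub>E VV D \<subseteq> good D a q X \<union> ((X \<rightarrow>\<^sub>E VV D) - (X \<rightarrow>\<^sub>E (Inr ` LV D :: vx set))) \<union> (\<Union>P\<in>Pow X. bad P)"
  proof
    fix e assume e: "e \<in> X \<rightarrow>\<^sub>E VV D"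
    show "e \<in> good D a q X \<union> ((X \<rightarrow>\<^sub>E VV D) - (X \<rightarrow>\<^sub>E (Inr ` LV D :: vx set))) \<union> (\<Union>P\<in>Pow X. bad P)"
    proof (cases "e \<in> X \<rightarrow>\<^sub>E (Inr ` LV D :: vx set)")
      case False thus ?thesis using e by simp
    next
      case True
      hence lf: "\<forall>x\<in>X. \<not> isl (e x)" by (auto simp: PiE_iff)
      show ?thesis
      proof (cases "generic D a q X e")
        case True thus ?thesis using e unfolding good_def by simp
      next
        case False
        then obtain P where "P \<subseteq> X" "card (SS D a e X P) < 2^q" using lf unfolding generic_def by auto
        thus ?thesis using \<open>e \<in> X \<rightarrow>\<^sub>E (Inr ` LV D :: vx set)\<close> unfolding bad_def by auto
      qed
    qed
  qed
  have fin1: "finite (good D a q X)" unfolding good_def using finA by simp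
  have fin3: "finite (\<Union>P\<in>Pow X. bad P)"
  proof (rule finite_subset)
    show "(\<Union>P\<in>Pow X. bad P) \<subseteq> X \<rightarrow>\<^sub>E VV D" using subL unfolding bad_def by auto
  qed (rule finA)
  have "card (X \<rightarrow>\<^sub>E VV D) \<le> card (good D a q X \<union> ((X \<rightarrow>\<^sub>E VV D) - (X \<rightarrow>\<^sub>E (Inr ` LV D :: vx set))) \<union> (\<Union>P\<in>Pow X. bad P))"
    by (rule card_mono[OF _ cover]) (use fin1 finA fin3 in simp)
  also have "\<dots> \<le> card (good D a q X) + card ((X \<rightarrow>\<^sub>E VV D) - (X \<rightarrow>\<^sub>E (Inr ` LV D :: vx set))) + card (\<Union>P\<in>Pow X. bad P)"
    by (meson add_mono_thms_linordered_semiring(3) card_Un_le le_trans)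
  also have "card ((X \<rightarrow>\<^sub>E VV D) - (X \<rightarrow>\<^sub>E (Inr ` LV D :: vx set))) = card (X \<rightarrow>\<^sub>E VV D) - card (X \<rightarrow>\<^sub>E (Inr ` LV D :: vx set))"
    using card_Diff_subset[OF finite_subset[OF subL finA] subL] by simp
  also have "card (\<Union>P\<in>Pow X. bad P) \<le> (\<Sum>P\<in>Pow X. card (bad P))"
    by (rule card_UN_le) (use X in simp)
  also have "\<dots> \<le> (\<Sum>P\<in>Pow X. 2^q * ((5 ^ card X - 1) ^ B * (5 ^ card X) ^ (D - B)))"
    by (rule sum_mono) (use bad_bound[OF X a M] in \<open>simp add: bad_def\<close>)
  also have "\<dots> = 2 ^ card X * (2^q * ((5 ^ card X - 1) ^ B * (5 ^ card X) ^ (D - B)))"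
    using X by (simp add: card_Pow)
  finally show ?thesis by simp
qed



lemma ratio_to_one: "(\<lambda>n. real (5 ^ Suc n) / real (Suc n + 5 ^ Suc n)) \<longlonglongrightarrow> 1"
proof -
  have le: "real (Suc n) / real (Suc n + 5 ^ Suc n) \<le> (2/5) ^ Suc n" for n
  proof -
    have "real (Suc n) / real (Suc n + 5 ^ Suc n) \<le> real (Suc n) / real (5 ^ Suc n :: nat)"
      by (intro divide_left_mono) (auto intro!: mult_pos_pos add_pos_nonneg)
    also have "\<dots> \<le> real (2 ^ Suc n :: nat) / real (5 ^ Suc n :: nat)"
      by (intro divide_right_mono) (use less_exp[of "Suc n"] in linarith, simp)
    also have "\<dots> = (2/5) ^ Suc n" by (simp add: power_divide)
    finally show ?thesis .
  qed
  have z: "(\<lambda>n. (2/5::real) ^ Suc n) \<longlonglongrightarrow> 0"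
    by (rule LIMSEQ_Suc[OF LIMSEQ_power_zero]) simp
  have "(\<lambda>n. real (Suc n) / real (Suc n + 5 ^ Suc n)) \<longlonglongrightarrow> 0"
    by (rule tendsto_sandwich[of "\<lambda>n. 0" _ _ "\<lambda>n. (2/5::real) ^ Suc n"]) (use le z in auto)
  hence "(\<lambda>n. 1 - real (Suc n) / real (Suc n + 5 ^ Suc n)) \<longlonglongrightarrow> 1 - 0"
    by (intro tendsto_intros)
  moreover have "1 - real (Suc n) / real (Suc n + 5 ^ Suc n) = real (5 ^ Suc n) / real (Suc n + 5 ^ Suc n)" for n
  proof -
    have aux: "0 < x + y \<Longrightarrow> 1 - x/(x+y) = y/(x+y)" for x y :: real by (simp add: field_simps)
    have "0 < real (Suc n) + real (5 ^ Suc n :: nat)" by (simp only: of_nat_add[symmetric] of_nat_0_less_iff)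
    from aux[OF this] show ?thesis by (simp only: of_nat_add)
  qed
  ultimately show ?thesis by simp
qed

lemma div_at_top: "M > 0 \<Longrightarrow> filterlim (\<lambda>n::nat. Suc n div M) at_top sequentially"
  unfolding filterlim_at_top
proof
  fix Z :: nat assume M: "M > 0"
  show "eventually (\<lambda>n. Z \<le> Suc n div M) sequentially"
    unfolding eventually_sequentially
  proof (intro exI allI impI)
    fix n assume "Z * M \<le> n"
    hence "(Z * M) div M \<le> Suc n div M" by (intro div_le_mono) simp
    thus "Z \<le> Suc n div M" using M by simp
  qed
qed

lemma good_frac:
  assumes X: "finite X" and a: "\<And>n. 1 \<le> a n \<and> a n \<le> 4"
  shows "(\<lambda>n. real (card (good (Suc n) (a n) q X)) / real (card (VV (Suc n))) ^ card X) \<longlonglongrightarrow> 1"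
proof -
  define k where "k = card X"
  define M :: nat where "M = 2 ^ q"
  define W :: nat where "W = 5 ^ k"
  define B where "B n = Suc n div M" for n
  define N where "N n = Suc n + 5 ^ Suc n" for n
  define \<rho> :: real where "\<rho> = (real W - 1) / real W"
  define C :: real where "C = 2 ^ k * real M"
  have M0: "M > 0" unfolding M_def by simp
  have W1: "W \<ge> 1" unfolding W_def by simp
  have \<rho>: "0 \<le> \<rho>" "\<rho> < 1" unfolding \<rho>_def using W1 by (auto simp: field_simps)
  have lower: "(real (5 ^ Suc n) / real (N n)) ^ k - C * \<rho> ^ B n
      \<le> real (card (good (Suc n) (a n) q X)) / real (N n) ^ k" for n
  proof -
    define D where "D = Suc n"
    have MB: "2^q * B n \<le> D" unfolding B_def D_def M_def by simp
    have BD: "B n \<le> D" unfolding B_def D_def by (simp add: div_le_dividend)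
    have cA: "card (X \<rightarrow>\<^sub>E VV D) = N n ^ k" using X unfolding k_def N_def D_def by (simp add: card_PiE card_VV)
    have cL: "card (X \<rightarrow>\<^sub>E (Inr ` LV D :: vx set)) = W ^ D"
    proof -
      have "card (X \<rightarrow>\<^sub>E (Inr ` LV D :: vx set)) = (5 ^ D) ^ k"
        using X unfolding k_def by (simp add: card_PiE card_image card_LV)
      thus ?thesis unfolding W_def by (simp add: power_mult[symmetric] mult.commute)
    qed
    have bnd: "N n ^ k \<le> card (good D (a n) q X) + (N n ^ k - W ^ D) + 2 ^ k * (M * ((W - 1) ^ B n * W ^ (D - B n)))"
      using card_good_bound[OF X _ _ MB, of "a n"] a[of n] cA cL unfolding W_def k_def M_def by simp
    have LN: "W ^ D \<le> N n ^ k"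
    proof -
      have "card (X \<rightarrow>\<^sub>E (Inr ` LV D :: vx set)) \<le> card (X \<rightarrow>\<^sub>E VV D)"
        by (intro card_mono PiE_mono) (use X finite_VV in \<open>auto simp: finite_PiE VV_def\<close>)
      thus ?thesis using cA cL by simp
    qed
    have "N n > 0" unfolding N_def by simp
    hence "real (N n) > 0" by (simp only: of_nat_0_less_iff)
    hence Npos: "real (N n) ^ k > 0" by (rule zero_less_power)
    have Wpos: "real W ^ D > 0" using W1 by simp
    have r1: "real W ^ D \<le> real (card (good D (a n) q X)) + C * ((real W - 1) ^ B n * real W ^ (D - B n))"
    proof -
      have "real (N n ^ k) \<le> real (card (good D (a n) q X) + (N n ^ k - W ^ D) + 2 ^ k * (M * ((W - 1) ^ B n * W ^ (D - B n))))"
        using bnd by linarith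
      also have "\<dots> = real (card (good D (a n) q X)) + (real (N n ^ k) - real (W ^ D)) + C * ((real W - 1) ^ B n * real W ^ (D - B n))"
        using LN W1 unfolding C_def by (simp add: of_nat_diff)
      finally show ?thesis by simp
    qed
    have r2: "C * ((real W - 1) ^ B n * real W ^ (D - B n)) / real (N n) ^ k \<le> C * \<rho> ^ B n"
    proof -
      have nn: "0 \<le> C * ((real W - 1) ^ B n * real W ^ (D - B n))" unfolding C_def using W1 by simp
      have LN': "real W ^ D \<le> real (N n) ^ k" using LN by (metis of_nat_le_iff of_nat_power)
      have "C * ((real W - 1) ^ B n * real W ^ (D - B n)) / real (N n) ^ k
          \<le> C * ((real W - 1) ^ B n * real W ^ (D - B n)) / real W ^ D"
        by (rule divide_left_mono[OF LN' nn mult_pos_pos[OF Npos Wpos]])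
      also have "real W ^ D = real W ^ B n * real W ^ (D - B n)"
        using BD by (simp add: power_add[symmetric])
      also have "C * ((real W - 1) ^ B n * real W ^ (D - B n)) / (real W ^ B n * real W ^ (D - B n)) = C * \<rho> ^ B n"
        unfolding \<rho>_def using W1 by (simp add: power_divide)
      finally show ?thesis .
    qed
    have "(real (5 ^ Suc n) / real (N n)) ^ k = real W ^ D / real (N n) ^ k"
      unfolding W_def D_def by (simp add: power_divide power_mult[symmetric] mult.commute)
    also have "\<dots> \<le> (real (card (good D (a n) q X)) + C * ((real W - 1) ^ B n * real W ^ (D - B n))) / real (N n) ^ k"
      using r1 Npos by (simp add: divide_right_mono)
    also have "\<dots> = real (card (good D (a n) q X)) / real (N n) ^ k + C * ((real W - 1) ^ B n * real W ^ (D - B n)) / real (N n) ^ k"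
      by (simp add: add_divide_distrib)
    finally show ?thesis using r2 unfolding D_def by simp
  qed
  have upper: "real (card (good (Suc n) (a n) q X)) / real (N n) ^ k \<le> 1" for n
  proof -
    have "card (good (Suc n) (a n) q X) \<le> card (X \<rightarrow>\<^sub>E VV (Suc n))"
      unfolding good_def by (rule card_mono) (use X finite_VV in \<open>auto simp: finite_PiE\<close>)
    also have "\<dots> = N n ^ k" using X unfolding k_def N_def by (simp add: card_PiE card_VV)
    finally have "real (card (good (Suc n) (a n) q X)) \<le> real (N n) ^ k" by (metis of_nat_le_iff of_nat_power)
    moreover have "N n > 0" unfolding N_def by simp
    hence "real (N n) > 0" by (simp only: of_nat_0_less_iff)
    hence "real (N n) ^ k > 0" by (rule zero_less_power)
    ultimately show ?thesis by (simp add: divide_le_eq_1)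
  qed
  have lim1: "(\<lambda>n. (real (5 ^ Suc n) / real (N n)) ^ k - C * \<rho> ^ B n) \<longlonglongrightarrow> 1 ^ k - C * 0"
  proof (intro tendsto_intros)
    show "(\<lambda>n. real (5 ^ Suc n) / real (N n)) \<longlonglongrightarrow> 1" using ratio_to_one unfolding N_def by simp
    show "(\<lambda>n. \<rho> ^ B n) \<longlonglongrightarrow> 0"
      unfolding B_def using filterlim_compose[OF LIMSEQ_power_zero[of \<rho>] div_at_top[OF M0]] \<rho> by simp
  qed
  have "(\<lambda>n. real (card (good (Suc n) (a n) q X)) / real (N n) ^ k) \<longlonglongrightarrow> 1"
    by (rule tendsto_sandwich[of "\<lambda>n. (real (5 ^ Suc n) / real (N n)) ^ k - C * \<rho> ^ B n" _ _ "\<lambda>n. 1"])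
      (use lower upper lim1 in auto)
  thus ?thesis unfolding N_def k_def card_VV .
qed



definition aa :: "nat \<Rightarrow> nat" where "aa n = (if even n then 2 else 3)"

lemma aa_bounds: "2 \<le> aa n" "aa n \<le> 3" unfolding aa_def by auto

definition gg :: "nat \<Rightarrow> nat \<Rightarrow> vx" where
  "gg n = (SOME h. bij_betw h {0..<card (VV (Suc n))} (VV (Suc n)))"

lemma gg_bij: "bij_betw (gg n) {0..<card (VV (Suc n))} (VV (Suc n))"
  unfolding gg_def by (rule someI_ex[OF ex_bij_betw_nat_finite[OF finite_VV]])

definition GG :: "nat \<Rightarrow> graph" where
  "GG n = \<lparr>verts = {0..<card (VV (Suc n))},
     adj = (\<lambda>x y. x \<in> {0..<card (VV (Suc n))} \<and> y \<in> {0..<card (VV (Suc n))} \<and> AA (aa n) (gg n x) (gg n y))\<rparr>"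

lemma GG_verts: "verts (GG n) = {0..<card (VV (Suc n))}" unfolding GG_def by simp

lemma GG_adj: "\<forall>x\<in>verts (GG n). \<forall>y\<in>verts (GG n). adj (GG n) x y = AA (aa n) (gg n x) (gg n y)"
  unfolding GG_def by simp

lemma GG_bij: "bij_betw (gg n) (verts (GG n)) (VV (Suc n))"
  using gg_bij unfolding GG_verts .

lemma VV_ne: "VV (Suc n) \<noteq> {}" unfolding VV_def by auto

lemma GG_finite: "finite_graph (GG n)"
proof -
  have "card (VV (Suc n)) > 0" using VV_ne finite_VV by (simp add: card_gt_0_iff)
  hence ne: "verts (GG n) \<noteq> {}" unfolding GG_verts by auto
  have irr: "\<not> AA a v v" for a v using AA_isl by blast
  show ?thesis unfolding finite_graph_def using ne irr AA_sym
    by (auto simp: GG_def)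
qed

lemma fv_finite: "finite (fv \<phi>)"
proof (induction \<phi>)
  case (FEq s t) thus ?case by (cases s; cases t) auto
next
  case (FAdj s t) thus ?case by (cases s; cases t) auto
qed auto

lemma some_in: "(SOME v. v \<in> verts (GG n)) \<in> verts (GG n)"
  using GG_finite[of n] unfolding finite_graph_def by (metis ex_in_conv someI_ex)

lemma count_transfer:
  assumes "r \<in> verts (GG n)"
  shows "card {e \<in> fv \<phi> \<rightarrow>\<^sub>E verts (GG n). sat (GG n) r e \<phi>}
       = card {e \<in> fv \<phi> \<rightarrow>\<^sub>E VV (Suc n). sat' (VV (Suc n)) (AA (aa n)) (gg n r) e \<phi>}"
proof -
  have "{e \<in> fv \<phi> \<rightarrow>\<^sub>E verts (GG n). sat (GG n) r e \<phi>}
     = {e \<in> fv \<phi> \<rightarrow>\<^sub>E verts (GG n). sat' (VV (Suc n)) (AA (aa n)) (gg n r) (gg n \<circ> e) \<phi>}"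
    using sat_transfer[OF GG_bij GG_adj assms] by (auto simp: PiE_iff)
  also have "card \<dots> = card {e \<in> fv \<phi> \<rightarrow>\<^sub>E VV (Suc n). sat' (VV (Suc n)) (AA (aa n)) (gg n r) e \<phi>}"
    by (rule card_transfer[OF GG_bij]) (rule sat'_cong, auto)
  finally show ?thesis .
qed

lemma card_GG: "card (verts (GG n)) = card (VV (Suc n))" unfolding GG_verts by simp

definition sv :: "form \<Rightarrow> nat \<Rightarrow> real" where
  "sv \<phi> n = real (card {e \<in> fv \<phi> \<rightarrow>\<^sub>E VV (Suc n). sat' (VV (Suc n)) (AA (aa n)) (Inl 0) e \<phi>})
     / real (card (VV (Suc n))) ^ card (fv \<phi>)"

lemma stone_GG: "no_root \<phi> \<Longrightarrow> stone \<phi> (GG n) = sv \<phi> n"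
proof -
  assume nr: "no_root \<phi>"
  have "stone \<phi> (GG n) = real (card {e \<in> fv \<phi> \<rightarrow>\<^sub>E VV (Suc n). sat' (VV (Suc n)) (AA (aa n)) (gg n (SOME v. v \<in> verts (GG n))) e \<phi>})
     / real (card (VV (Suc n))) ^ card (fv \<phi>)"
    unfolding stone_def stone_rooted_def count_transfer[OF some_in] card_GG ..
  also have "{e \<in> fv \<phi> \<rightarrow>\<^sub>E VV (Suc n). sat' (VV (Suc n)) (AA (aa n)) (gg n (SOME v. v \<in> verts (GG n))) e \<phi>}
     = {e \<in> fv \<phi> \<rightarrow>\<^sub>E VV (Suc n). sat' (VV (Suc n)) (AA (aa n)) (Inl 0) e \<phi>}"
  proof -
    have "\<And>e. sat' (VV (Suc n)) (AA (aa n)) (gg n (SOME v. v \<in> verts (GG n))) e \<phi> = sat' (VV (Suc n)) (AA (aa n)) (Inl 0) e \<phi>"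
      by (rule sat'_noroot[OF nr])
    thus ?thesis by simp
  qed
  also have "real (card {e \<in> fv \<phi> \<rightarrow>\<^sub>E VV (Suc n). sat' (VV (Suc n)) (AA (aa n)) (Inl 0) e \<phi>})
     / real (card (VV (Suc n))) ^ card (fv \<phi>) = sv \<phi> n" unfolding sv_def ..
  finally show ?thesis .
qed



lemma sv_conv:
  assumes nr: "no_root \<phi>"
  shows "convergent (sv \<phi>)"
proof -
  define X where "X = fv \<phi>"
  define k where "k = card X"
  define q where "q = qd \<phi>"
  define S where "S n = {e \<in> X \<rightarrow>\<^sub>E VV (Suc n). sat' (VV (Suc n)) (AA (aa n)) (Inl 0) e \<phi>}" for n
  define Gd where "Gd n = good (Suc n) (aa n) q X" for n
  define Nk where "Nk n = real (card (VV (Suc n))) ^ k" for n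
  define fr where "fr n = real (card (Gd n)) / Nk n" for n
  have X: "finite X" unfolding X_def by (rule fv_finite)
  have sv: "sv \<phi> n = real (card (S n)) / Nk n" for n unfolding sv_def S_def Nk_def k_def X_def ..
  have Nkpos: "Nk n > 0" for n
  proof -
    have "card (VV (Suc n)) > 0" using VV_ne finite_VV by (simp add: card_gt_0_iff)
    hence "real (card (VV (Suc n))) > 0" by (simp only: of_nat_0_less_iff)
    thus ?thesis unfolding Nk_def by (rule zero_less_power)
  qed
  have cardA: "real (card (X \<rightarrow>\<^sub>E VV (Suc n))) = Nk n" for n
    unfolding Nk_def k_def using X by (simp add: card_PiE)
  have finA: "finite (X \<rightarrow>\<^sub>E VV (Suc n))" for n using X finite_VV by (simp add: finite_PiE)
  have ab: "1 \<le> aa n \<and> aa n \<le> 4" for n using aa_bounds[of n] by simp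
  have fr: "fr \<longlonglongrightarrow> 1"
    unfolding fr_def Gd_def Nk_def k_def using good_frac[where q=q and a=aa, OF X ab] by simp
  define n0 where "n0 = k + q"
  have same: "sat' (VV (Suc n)) (AA (aa n)) (Inl 0) e \<phi> = sat' (VV (Suc m)) (AA (aa m)) (Inl 0) e' \<phi>"
    if nm: "n0 \<le> n" "n0 \<le> m" and e: "e \<in> Gd n" and e': "e' \<in> Gd m" for n m e e'
  proof -
    have I: "Inv (Suc n) (aa n) (Suc m) (aa m) q X e e'"
    proof (rule gen_Inv[OF X])
      show "card X + q \<le> Suc n" "card X + q \<le> Suc m" using nm unfolding n0_def k_def by auto
      show "\<forall>x\<in>X. e x \<in> VV (Suc n)" "generic (Suc n) (aa n) q X e"
        using e unfolding Gd_def good_def by (auto simp: PiE_iff)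
      show "\<forall>x\<in>X. e' x \<in> VV (Suc m)" "generic (Suc m) (aa m) q X e'"
        using e' unfolding Gd_def good_def by (auto simp: PiE_iff)
    qed
    show ?thesis
      by (rule EF[OF aa_bounds aa_bounds nr _ _ I]) (auto simp: q_def X_def)
  qed
  have "eventually (\<lambda>n. fr n > 0) sequentially"
    using order_tendstoD(1)[OF fr, of 0] by simp
  then obtain N where N: "\<And>n. n \<ge> N \<Longrightarrow> fr n > 0" unfolding eventually_sequentially by blast
  define n1 where "n1 = max N n0"
  have "fr n1 > 0" using N unfolding n1_def by simp
  hence "card (Gd n1) > 0" unfolding fr_def using Nkpos[of n1]
    by (metis divide_eq_0_iff gr0I less_irrefl of_nat_0)
  hence "Gd n1 \<noteq> {}" by auto
  then obtain e1 where e1: "e1 \<in> Gd n1" by auto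
  define T where "T = sat' (VV (Suc n1)) (AA (aa n1)) (Inl 0) e1 \<phi>"
  have Tn: "sat' (VV (Suc n)) (AA (aa n)) (Inl 0) e \<phi> = T" if "n \<ge> n1" "e \<in> Gd n" for n e
    using same[of n n1 e e1] that e1 unfolding T_def n1_def by auto
  have GdA: "Gd n \<subseteq> X \<rightarrow>\<^sub>E VV (Suc n)" for n unfolding Gd_def good_def by auto
  have SA: "S n \<subseteq> X \<rightarrow>\<^sub>E VV (Suc n)" for n unfolding S_def by auto
  have up: "sv \<phi> n \<le> 1" for n
  proof -
    have "real (card (S n)) \<le> Nk n" using card_mono[OF finA SA] cardA[of n] by (metis of_nat_le_iff)
    thus ?thesis unfolding sv using Nkpos[of n] by (simp add: divide_le_eq_1)
  qed
  have lo: "0 \<le> sv \<phi> n" for n unfolding sv using Nkpos[of n] by simp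
  show ?thesis
  proof (cases T)
    case True
    have "fr n \<le> sv \<phi> n" if "n \<ge> n1" for n
    proof -
      have "Gd n \<subseteq> S n" using Tn[OF that] True GdA unfolding S_def by auto
      hence "card (Gd n) \<le> card (S n)" using finA SA by (meson card_mono finite_subset)
      thus ?thesis unfolding fr_def sv using Nkpos[of n] by (simp add: divide_right_mono)
    qed
    hence "sv \<phi> \<longlonglongrightarrow> 1"
      by (intro tendsto_sandwich[OF _ _ fr tendsto_const, of "sv \<phi>"])
        (auto simp: eventually_sequentially up intro: exI[of _ n1])
    thus ?thesis unfolding convergent_def by blast
  next
    case False
    have "sv \<phi> n \<le> 1 - fr n" if "n \<ge> n1" for n
    proof -
      have Ssub: "S n \<subseteq> (X \<rightarrow>\<^sub>E VV (Suc n)) - Gd n" using Tn[OF that] False SA unfolding S_def by auto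
      hence "card (S n) \<le> card (X \<rightarrow>\<^sub>E VV (Suc n)) - card (Gd n)"
        using card_mono[OF _ Ssub] finA card_Diff_subset[OF finite_subset[OF GdA finA] GdA] by simp
      hence h1: "real (card (S n)) \<le> real (card (X \<rightarrow>\<^sub>E VV (Suc n)) - card (Gd n))"
        by (simp only: of_nat_le_iff)
      have "real (card (X \<rightarrow>\<^sub>E VV (Suc n)) - card (Gd n)) = real (card (X \<rightarrow>\<^sub>E VV (Suc n))) - real (card (Gd n))"
        by (rule of_nat_diff[OF card_mono[OF finA GdA]])
      hence "real (card (S n)) \<le> real (card (X \<rightarrow>\<^sub>E VV (Suc n))) - real (card (Gd n))"
        using h1 by linarith
      hence "real (card (S n)) \<le> Nk n - real (card (Gd n))" using cardA by simp
      thus ?thesis unfolding fr_def sv using Nkpos[of n] by (simp add: field_simps)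
    qed
    moreover have "(\<lambda>n. 1 - fr n) \<longlonglongrightarrow> 0" using tendsto_diff[OF tendsto_const fr, of 1] by simp
    ultimately have "sv \<phi> \<longlonglongrightarrow> 0"
      by (intro tendsto_sandwich[where f="\<lambda>n. 0" and g="sv \<phi>" and h="\<lambda>n. 1 - fr n"])
        (auto simp: eventually_sequentially lo)
    thus ?thesis unfolding convergent_def by blast
  qed
qed



definition twin :: form where
  "twin = FNot (FEx 3 (FNot (FAnd (FNot (FAnd (FAdj (Var 1) (Var 3)) (FNot (FAdj (Var 2) (Var 3)))))
                                (FNot (FAnd (FAdj (Var 2) (Var 3)) (FNot (FAdj (Var 1) (Var 3))))))))"

definition xi :: form where
  "xi = FEx 1 (FEx 2 (FAnd (FNot (FEq (Var 1) (Var 2)))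
          (FAnd (FAdj (Var 0) (Var 1)) (FAnd (FAdj (Var 0) (Var 2)) twin))))"

lemma fv_xi: "fv xi = {0}" by (auto simp: xi_def twin_def)
lemma nr_xi: "no_root xi" by (simp add: xi_def twin_def)

lemma sat_xi_unfold:
  "sat' V A r e xi = (\<exists>y\<in>V. \<exists>z\<in>V. y \<noteq> z \<and> A (e 0) y \<and> A (e 0) z \<and> (\<forall>w\<in>V. A y w = A z w))"
  by (auto simp: xi_def twin_def)

lemma sat_xi:
  assumes a: "2 \<le> a" and a3: "a \<le> 3" and x: "x \<in> VV D"
  shows "(\<exists>y\<in>VV D. \<exists>z\<in>VV D. y \<noteq> z \<and> AA a x y \<and> AA a x z \<and> (\<forall>w\<in>VV D. AA a y w = AA a z w)) \<longleftrightarrow> isl x"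
proof (cases x)
  case (Inl c)
  have c: "c < D" using x Inl unfolding VV_def by auto
  define u0 where "u0 = (\<lambda>j\<in>{..<D}. 0::nat)"
  define u1 where "u1 = (\<lambda>j\<in>{..<D}. if j = c then 1 else 0::nat)"
  have u0L: "u0 \<in> LV D" unfolding u0_def LV_def by auto
  have u1L: "u1 \<in> LV D" unfolding u1_def LV_def by auto
  have ne: "(Inr u0 :: vx) \<noteq> Inr u1" unfolding u1_def u0_def using c by (auto dest!: fun_cong[of _ _ c])
  have tw: "\<forall>w\<in>VV D. AA a (Inr u0) w = AA a (Inr u1) w"
  proof
    fix w assume w: "w \<in> VV D"
    show "AA a (Inr u0) w = AA a (Inr u1) w"
    proof (cases w)
      case (Inl j)
      have "j < D" using w Inl unfolding VV_def by auto
      thus ?thesis using Inl a unfolding u1_def u0_def by auto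
    qed simp
  qed
  have "Inr u0 \<in> VV D" "Inr u1 \<in> VV D" using u0L u1L unfolding VV_def by auto
  moreover have "AA a x (Inr u0)" "AA a x (Inr u1)" using Inl a c unfolding u0_def u1_def by auto
  ultimately have "\<exists>y\<in>VV D. \<exists>z\<in>VV D. y \<noteq> z \<and> AA a x y \<and> AA a x z \<and> (\<forall>w\<in>VV D. AA a y w = AA a z w)"
    using ne tw by blast
  thus ?thesis using Inl by simp
next
  case (Inr u)
  have "\<not> (\<exists>y\<in>VV D. \<exists>z\<in>VV D. y \<noteq> z \<and> AA a x y \<and> AA a x z \<and> (\<forall>w\<in>VV D. AA a y w = AA a z w))"
  proof
    assume "\<exists>y\<in>VV D. \<exists>z\<in>VV D. y \<noteq> z \<and> AA a x y \<and> AA a x z \<and> (\<forall>w\<in>VV D. AA a y w = AA a z w)"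
    then obtain y z where yz: "y \<in> VV D" "z \<in> VV D" "y \<noteq> z" "AA a x y" "AA a x z" "\<forall>w\<in>VV D. AA a y w = AA a z w"
      by blast
    obtain i where i: "y = Inl i" using yz(4) Inr by (cases y) auto
    obtain j where j: "z = Inl j" using yz(5) Inr by (cases z) auto
    have ij: "i < D" "j < D" "i \<noteq> j" using yz(1,2,3) i j unfolding VV_def by auto
    define w0 where "w0 = (\<lambda>t\<in>{..<D}. if t = i then 0 else (4::nat))"
    have "Inr w0 \<in> VV D" unfolding VV_def LV_def w0_def by auto
    moreover have "AA a y (Inr w0)" "\<not> AA a z (Inr w0)" using i j ij a a3 unfolding w0_def by auto
    ultimately show False using yz(6) by blast
  qed
  thus ?thesis using Inr by simp
qed

lemma defset_GG: "defset xi (GG n) = {v \<in> verts (GG n). isl (gg n v)}"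
proof -
  have "sat (GG n) (SOME v. v \<in> verts (GG n)) (\<lambda>_. v) xi = isl (gg n v)" if v: "v \<in> verts (GG n)" for v
  proof -
    have "sat (GG n) (SOME v. v \<in> verts (GG n)) (\<lambda>_. v) xi
       = sat' (VV (Suc n)) (AA (aa n)) (gg n (SOME v. v \<in> verts (GG n))) (gg n \<circ> (\<lambda>_. v)) xi"
      by (rule sat_transfer[OF GG_bij GG_adj some_in]) (use v in simp)
    also have "\<dots> = isl (gg n v)"
      unfolding sat_xi_unfold using sat_xi[OF aa_bounds(1) aa_bounds(2), of "gg n v" "Suc n" n]
        bij_betwE[OF GG_bij] v by simp
    finally show ?thesis .
  qed
  thus ?thesis unfolding defset_def by auto
qed

lemma defset_ne: "defset xi (GG n) \<noteq> {}"
proof -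
  have "Inl 0 \<in> VV (Suc n)" unfolding VV_def by auto
  then obtain v where "v \<in> verts (GG n)" "gg n v = Inl 0"
    using GG_bij[of n] unfolding bij_betw_def by (metis imageE)
  thus ?thesis unfolding defset_GG by force
qed



lemma card_single: "card {e \<in> {i} \<rightarrow>\<^sub>E S. Q (e i)} = card {v \<in> S. Q v}"
proof -
  have inj: "inj_on (\<lambda>e. e i) {e \<in> {i} \<rightarrow>\<^sub>E S. Q (e i)}"
  proof (rule inj_onI)
    fix e1 e2 assume e: "e1 \<in> {e \<in> {i} \<rightarrow>\<^sub>E S. Q (e i)}" "e2 \<in> {e \<in> {i} \<rightarrow>\<^sub>E S. Q (e i)}" "e1 i = e2 i"
    show "e1 = e2" by (rule PiE_ext[of e1 "{i}" "\<lambda>_. S"]) (use e in auto)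
  qed
  have "(\<lambda>e. e i) ` {e \<in> {i} \<rightarrow>\<^sub>E S. Q (e i)} = {v \<in> S. Q v}"
  proof
    show "(\<lambda>e. e i) ` {e \<in> {i} \<rightarrow>\<^sub>E S. Q (e i)} \<subseteq> {v \<in> S. Q v}" by auto
    show "{v \<in> S. Q v} \<subseteq> (\<lambda>e. e i) ` {e \<in> {i} \<rightarrow>\<^sub>E S. Q (e i)}"
    proof
      fix v assume v: "v \<in> {v \<in> S. Q v}"
      have "(\<lambda>j\<in>{i}. v) \<in> {e \<in> {i} \<rightarrow>\<^sub>E S. Q (e i)}" using v by auto
      thus "v \<in> (\<lambda>e. e i) ` {e \<in> {i} \<rightarrow>\<^sub>E S. Q (e i)}" by (rule image_eqI[rotated]) simp
    qed
  qed
  thus ?thesis using card_image[OF inj] by simp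
qed

lemma card_below:
  assumes c: "c < D" and a: "a \<le> 5"
  shows "card {u \<in> LV D. u c < a} = a * 5 ^ (D - 1)"
proof -
  have "{u \<in> LV D. u c < a} = PiE {..<D} (\<lambda>j. if j = c then {..<a} else {..<5})"
  proof (intro equalityI subsetI)
    fix u assume u: "u \<in> {u \<in> LV D. u c < a}"
    hence e: "u \<in> extensional {..<D}" "\<forall>j<D. u j < 5" "u c < a" unfolding LV_def by (auto simp: PiE_iff)
    show "u \<in> PiE {..<D} (\<lambda>j. if j = c then {..<a} else {..<5})"
      unfolding PiE_iff using e by simp
  next
    fix u assume u: "u \<in> PiE {..<D} (\<lambda>j. if j = c then {..<a} else {..<5})"
    hence e: "u \<in> extensional {..<D}" "\<forall>j<D. u j \<in> (if j = c then {..<a} else {..<5})" by (auto simp: PiE_iff)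
    have "\<forall>j<D. u j < 5"
    proof (intro allI impI)
      fix j assume "j < D" thus "u j < 5" using e(2) a by (cases "j = c") auto
    qed
    moreover have "u c < a" using e(2) c by auto
    ultimately show "u \<in> {u \<in> LV D. u c < a}" unfolding LV_def PiE_iff using e(1) by simp
  qed
  hence "card {u \<in> LV D. u c < a} = (\<Prod>j\<in>{..<D}. card (if j = c then {..<a} else {..<5::nat}))"
    by (simp add: card_PiE)
  also have "\<dots> = (\<Prod>j\<in>{..<D}. if j = c then a else 5)" by (intro prod.cong) auto
  also have "\<dots> = a * (\<Prod>j\<in>{..<D} - {c}. if j = c then a else 5)"
    using c by (subst prod.remove[of _ c]) auto
  also have "(\<Prod>j\<in>{..<D} - {c}. if j = c then a else 5) = (\<Prod>j\<in>{..<D} - {c}. 5::nat)"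
    by (intro prod.cong) auto
  also have "\<dots> = 5 ^ (D - 1)" using c by simp
  finally show ?thesis .
qed

lemma rooted_val:
  assumes r: "r \<in> defset xi (GG n)"
  shows "stone_rooted (FAdj Rt (Var 0)) (GG n) r = real (aa n * 5 ^ n) / real (Suc n + 5 ^ Suc n)"
proof -
  have rv: "r \<in> verts (GG n)" and il: "isl (gg n r)" using r unfolding defset_GG by auto
  then obtain c where c: "gg n r = Inl c" by (cases "gg n r") auto
  have "gg n r \<in> VV (Suc n)" using bij_betwE[OF GG_bij] rv by blast
  hence cD: "c < Suc n" using c unfolding VV_def by auto
  have "card {e \<in> fv (FAdj Rt (Var 0)) \<rightarrow>\<^sub>E verts (GG n). sat (GG n) r e (FAdj Rt (Var 0))}
     = card {e \<in> fv (FAdj Rt (Var 0)) \<rightarrow>\<^sub>E VV (Suc n). sat' (VV (Suc n)) (AA (aa n)) (gg n r) e (FAdj Rt (Var 0))}"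
    by (rule count_transfer[OF rv])
  also have "\<dots> = card {e \<in> {0::nat} \<rightarrow>\<^sub>E VV (Suc n). AA (aa n) (Inl c) (e 0)}" using c by simp
  also have "\<dots> = card {v \<in> VV (Suc n). AA (aa n) (Inl c) v}" by (rule card_single)
  also have "{v \<in> VV (Suc n). AA (aa n) (Inl c) v} = Inr ` {u \<in> LV (Suc n). u c < aa n}"
    unfolding VV_def by auto
  also have "card \<dots> = card {u \<in> LV (Suc n). u c < aa n}" by (simp add: card_image)
  also have "\<dots> = aa n * 5 ^ n" using card_below[OF cD, of "aa n"] aa_bounds[of n] by simp
  finally have num: "card {e \<in> fv (FAdj Rt (Var 0)) \<rightarrow>\<^sub>E verts (GG n). sat (GG n) r e (FAdj Rt (Var 0))} = aa n * 5 ^ n" .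
  show ?thesis unfolding stone_rooted_def num card_GG card_VV by simp
qed

lemma not_conv:
  assumes r: "\<forall>n. r n \<in> defset xi (GG n)"
  shows "\<not> convergent (\<lambda>n. stone_rooted (FAdj Rt (Var 0)) (GG n) (r n))"
proof
  assume "convergent (\<lambda>n. stone_rooted (FAdj Rt (Var 0)) (GG n) (r n))"
  then obtain L where L: "(\<lambda>n. stone_rooted (FAdj Rt (Var 0)) (GG n) (r n)) \<longlonglongrightarrow> L"
    unfolding convergent_def by blast
  define \<rho> where "\<rho> n = real (5 ^ Suc n) / real (Suc n + 5 ^ Suc n)" for n
  have \<rho>: "\<rho> \<longlonglongrightarrow> 1" unfolding \<rho>_def by (rule ratio_to_one)
  have val: "stone_rooted (FAdj Rt (Var 0)) (GG n) (r n) = real (aa n) / 5 * \<rho> n" for n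
    unfolding rooted_val[OF r[rule_format]] \<rho>_def by (simp add: field_simps)
  have \<rho>ne: "\<rho> n \<noteq> 0" for n
  proof -
    have "real (5 ^ Suc n :: nat) > 0" "real (Suc n + 5 ^ Suc n) > 0" by (simp only: of_nat_0_less_iff; simp)+
    thus ?thesis unfolding \<rho>_def by simp
  qed
  have "(\<lambda>n. 5 * (stone_rooted (FAdj Rt (Var 0)) (GG n) (r n) / \<rho> n)) \<longlonglongrightarrow> 5 * (L / 1)"
    by (intro tendsto_intros L \<rho>) simp
  moreover have "5 * (stone_rooted (FAdj Rt (Var 0)) (GG n) (r n) / \<rho> n) = real (aa n)" for n
    unfolding val using \<rho>ne[of n] by simp
  ultimately have A: "(\<lambda>n. real (aa n)) \<longlonglongrightarrow> 5 * L" by simp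
  have "(\<lambda>n. real (aa (Suc n)) - real (aa n)) \<longlonglongrightarrow> 5 * L - 5 * L"
    by (intro tendsto_diff LIMSEQ_Suc[OF A] A)
  hence "(\<lambda>n. \<bar>real (aa (Suc n)) - real (aa n)\<bar>) \<longlonglongrightarrow> \<bar>0\<bar>" by (intro tendsto_rabs) simp
  moreover have "\<bar>real (aa (Suc n)) - real (aa n)\<bar> = 1" for n unfolding aa_def by auto
  ultimately have "(\<lambda>n. 1::real) \<longlonglongrightarrow> 0" by simp
  thus False using LIMSEQ_const_iff[of "1::real" 0] by simp
qed

theorem proposition7:
  shows "\<exists>(G :: nat \<Rightarrow> graph) \<xi>.
     (\<forall>n. finite_graph (G n)) \<and> FO_convergent G \<and>
     no_root \<xi> \<and> fv \<xi> = {0} \<and>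
     (\<forall>n. defset \<xi> (G n) \<noteq> {}) \<and>
     \<not> (\<exists>r. (\<forall>n. r n \<in> defset \<xi> (G n)) \<and> FO_convergent_rooted G r)"
proof (intro exI conjI)
  show "\<forall>n. finite_graph (GG n)" using GG_finite by blast
  show "FO_convergent GG" unfolding FO_convergent_def
  proof (intro allI impI)
    fix \<phi> assume nr: "no_root \<phi>"
    have "(\<lambda>n. stone \<phi> (GG n)) = sv \<phi>" using stone_GG[OF nr] by auto
    thus "convergent (\<lambda>n. stone \<phi> (GG n))" using sv_conv[OF nr] by simp
  qed
  show "no_root xi" by (rule nr_xi)
  show "fv xi = {0}" by (rule fv_xi)
  show "\<forall>n. defset xi (GG n) \<noteq> {}" using defset_ne by blast
  show "\<not> (\<exists>r. (\<forall>n. r n \<in> defset xi (GG n)) \<and> FO_convergent_rooted GG r)"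
    unfolding FO_convergent_rooted_def using not_conv by blast
qed


end
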